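(* Fix $C>2\pi$. For $y,z>0$ and $\varepsilon\in(0,1)$ let $\{X_r\}_{0\le r\le1}$ be a Bessel-3 bridge from $\varepsilon^{3/4}z$ to $\varepsilon^{3/4}y$ over time $1$, and let $\tau=\inf\{r\ge0: X_r\ge2C\varepsilon^{1/4}\}$ (with $\inf\emptyset=\infty$). There exists a positive constant $C_9$ such that for all $\varepsilon$ sufficiently small and all $y,z\in(0,\infty)$, \[ P\Big(\Big\{\tau\le\tfrac12\Big\}\cap\Big\{\min_{0\le r\le\varepsilon}X_{\tau+r}\le\tfrac{3C\varepsilon^{1/4}}{2}\Big\}\Big)\le\Big(\frac1{yz}+2\Big)e^{-C_9/\sqrt\varepsilon}. \]
   Context: A Bessel-3 bridge from $a$ to $b$ over time $u$ is a Bessel-3 process (radial part of three-dimensional Brownian motion) started at $a$ and conditioned to be at $b$ at time $u$; for $a,b>0$ it has the same law as a Brownian bridge from $a$ to $b$ over time $u$ conditioned to avoid $0$. *)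

theory Defs
  imports "HOL-Probability.Probability"
begin

definition bes3_density :: "real \<Rightarrow> real \<Rightarrow> real \<Rightarrow> real" where
  "bes3_density t x y =
     (if 0 < x \<and> 0 < y then
        (y / x) * (1 / sqrt (2 * pi * t)) *
        (exp (- ((y - x)^2) / (2 * t)) - exp (- ((y + x)^2) / (2 * t)))
      else 0)"

text \<open>Joint density of (X (ts 0), ..., X (ts (n-1))) for a Bessel-3 bridge from a to b
  over time 1, where 0 < ts 0 < ... < ts (n-1) < 1.\<close>
definition bes3_bridge_fdd ::
    "real \<Rightarrow> real \<Rightarrow> nat \<Rightarrow> (nat \<Rightarrow> real) \<Rightarrow> (nat \<Rightarrow> real) \<Rightarrow> real" where
  "bes3_bridge_fdd a b n ts x =
     (\<Prod>i<n. bes3_density (ts i - (if i = 0 then 0 else ts (i - 1)))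
                           (if i = 0 then a else x (i - 1)) (x i))
     * bes3_density (1 - ts (n - 1)) (x (n - 1)) b / bes3_density 1 a b"

definition bes3_bridge :: "'a measure \<Rightarrow> (real \<Rightarrow> 'a \<Rightarrow> real) \<Rightarrow> real \<Rightarrow> real \<Rightarrow> bool" where
  "bes3_bridge M X a b \<longleftrightarrow>
     prob_space M \<and>
     (\<forall>t\<in>{0..1}. X t \<in> borel_measurable M) \<and>
     (\<forall>\<omega>\<in>space M. continuous_on {0..1} (\<lambda>t. X t \<omega>)) \<and>
     (\<forall>n ts. 0 < n \<longrightarrow> 0 < ts 0 \<longrightarrow> ts (n - 1) < 1 \<longrightarrow>
        (\<forall>i. Suc i < n \<longrightarrow> ts i < ts (Suc i)) \<longrightarrow>
        distr M (PiM {..<n} (\<lambda>_. borel)) (\<lambda>\<omega>. \<lambda>i\<in>{..<n}. X (ts i) \<omega>) =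
        density (PiM {..<n} (\<lambda>_. lborel)) (\<lambda>x. ennreal (bes3_bridge_fdd a b n ts x)))"

definition hit_time :: "(real \<Rightarrow> 'a \<Rightarrow> real) \<Rightarrow> real \<Rightarrow> 'a \<Rightarrow> ereal" where
  "hit_time X L \<omega> = Inf (ereal ` {r \<in> {0..1}. L \<le> X r \<omega>})"

end

theory Submission
  imports Defs "HOL-Real_Asymp.Real_Asymp"
begin

lemma aux1:
  fixes s r v e q :: real
  assumes "0 < s" "0 < r" "0 < q"
  shows "- v\<^sup>2 / (2 * s) + - (e - v)\<^sup>2 / (2 * r) = - (r * q * v\<^sup>2 + s * q * (e - v)\<^sup>2) / (2 * s * r * q)"
  using assms by (simp add: field_simps)

lemma aux2:
  fixes s r v e q :: real
  assumes "0 < s" "0 < r" "0 < q"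
  shows "- e\<^sup>2 / (2 * q) + - (v - s * e / q)\<^sup>2 / (2 * (s * r / q)) =
        - (s * r * e\<^sup>2 + (q * v - s * e)\<^sup>2) / (2 * s * r * q)"
proof -
  have "v - s * e / q = (q * v - s * e) / q" using assms by (simp add: field_simps)
  then show ?thesis using assms by (simp add: field_simps power_divide power2_eq_square)
qed

lemma gauss_mult:
  fixes s r v e :: real
  assumes "0 < s" "0 < r"
  shows "normal_density 0 (sqrt s) v * normal_density 0 (sqrt r) (e - v) =
         normal_density 0 (sqrt (s + r)) e * normal_density (s * e / (s + r)) (sqrt (s * r / (s + r))) v"
proof -
  define q where "q = s + r"
  have q: "q > 0" using assms by (simp add: q_def)
  have n: "r * q * v\<^sup>2 + s * q * (e - v)\<^sup>2 = s * r * e\<^sup>2 + (q * v - s * e)\<^sup>2"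
    unfolding q_def by algebra
  have ex: "- v\<^sup>2 / (2 * s) + - (e - v)\<^sup>2 / (2 * r) =
      - e\<^sup>2 / (2 * q) + - (v - s * e / q)\<^sup>2 / (2 * (s * r / q))"
    unfolding aux1[OF assms q] aux2[OF assms q] n ..
  have pf: "1 / sqrt (2 * pi * s) * (1 / sqrt (2 * pi * r)) =
      1 / sqrt (2 * pi * q) * (1 / sqrt (2 * pi * (s * r / q)))"
    using assms q by (simp add: real_sqrt_mult[symmetric] field_simps)
  have "normal_density 0 (sqrt s) v * normal_density 0 (sqrt r) (e - v) = 
     (1 / sqrt (2 * pi * s) * (1 / sqrt (2 * pi * r))) * exp (- v\<^sup>2 / (2 * s) + - (e - v)\<^sup>2 / (2 * r))"
    using assms unfolding normal_density_def by (simp add: mult_exp_exp)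
  also have "\<dots> = (1 / sqrt (2 * pi * q) * (1 / sqrt (2 * pi * (s * r / q)))) *
     exp (- e\<^sup>2 / (2 * q) + - (v - s * e / q)\<^sup>2 / (2 * (s * r / q)))"
    by (simp only: ex pf)
  also have "\<dots> = normal_density 0 (sqrt q) e * normal_density (s * e / q) (sqrt (s * r / q)) v" 
    using assms q unfolding normal_density_def by (simp add: mult_exp_exp)
  finally show ?thesis unfolding q_def .
qed

lemma gauss_chernoff:
  fixes \<mu> \<sigma> l u :: real
  assumes "0 < \<sigma>"
  shows "normal_density \<mu> \<sigma> u * exp (l * (u - \<mu>)) = exp (l\<^sup>2 * \<sigma>\<^sup>2 / 2) * normal_density (\<mu> + l * \<sigma>\<^sup>2) \<sigma> u"
proof -
  have "-(u - \<mu>)\<^sup>2/ (2 * \<sigma>\<^sup>2) + l * (u - \<mu>) = l\<^sup>2 * \<sigma>\<^sup>2 / 2 + -(u - (\<mu> + l * \<sigma>\<^sup>2))\<^sup>2/ (2 * \<sigma>\<^sup>2)"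
    using assms by (simp add: field_simps power2_eq_square)
  then show ?thesis unfolding normal_density_def
    by (simp add: exp_add[symmetric] mult_ac)
qed

lemma nn_integral_normal_density: "0 < \<sigma> \<Longrightarrow> (\<integral>\<^sup>+x. ennreal (normal_density \<mu> \<sigma> x) \<partial>lborel) = 1"
  by (subst nn_integral_eq_integral) auto

lemma normal_tail:
  fixes \<mu> \<sigma> \<delta> :: real
  assumes s: "0 < \<sigma>" and d: "0 \<le> \<delta>"
  shows "(\<integral>\<^sup>+u. ennreal (normal_density \<mu> \<sigma> u) * indicator {u. \<delta> < \<bar>u - \<mu>\<bar>} u \<partial>lborel)
          \<le> ennreal (2 * exp (- \<delta>\<^sup>2 / (2 * \<sigma>\<^sup>2)))"
proof -
  define l where "l = \<delta> / \<sigma>\<^sup>2"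
  have l0: "0 \<le> l" using d s by (simp add: l_def)
  define c where "c = exp (- l * \<delta>) * exp (l\<^sup>2 * \<sigma>\<^sup>2 / 2)"
  have c: "c = exp (- \<delta>\<^sup>2 / (2 * \<sigma>\<^sup>2))"
    unfolding c_def l_def using s by (simp add: mult_exp_exp field_simps power2_eq_square)
  have pw: "ennreal (normal_density \<mu> \<sigma> u) * indicator {u. \<delta> < \<bar>u - \<mu>\<bar>} u \<le>
      ennreal (c * normal_density (\<mu> + l * \<sigma>\<^sup>2) \<sigma> u) + ennreal (c * normal_density (\<mu> + (-l) * \<sigma>\<^sup>2) \<sigma> u)" for u
  proof -
    have e1: "c * normal_density (\<mu> + l * \<sigma>\<^sup>2) \<sigma> u = exp (- l * \<delta>) * (normal_density \<mu> \<sigma> u * exp (l * (u - \<mu>)))"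
      unfolding c_def gauss_chernoff[OF s] by simp
    have e2: "c * normal_density (\<mu> + (-l) * \<sigma>\<^sup>2) \<sigma> u = exp (- l * \<delta>) * (normal_density \<mu> \<sigma> u * exp ((-l) * (u - \<mu>)))"
      unfolding c_def gauss_chernoff[OF s] by simp
    show ?thesis
    proof (cases "\<delta> < \<bar>u - \<mu>\<bar>")
      case True
      have "1 \<le> exp (- l * \<delta>) * exp (l * (u - \<mu>)) + exp (- l * \<delta>) * exp ((-l) * (u - \<mu>))"
      proof (cases "u - \<mu> \<ge> 0")
        case True
        with \<open>\<delta> < \<bar>u - \<mu>\<bar>\<close> l0 have "l * \<delta> \<le> l * (u - \<mu>)" 
          by (intro mult_left_mono) auto
        then have "0 \<le> - l * \<delta> + l * (u - \<mu>)" by simp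
        then have "1 \<le> exp (- l * \<delta>) * exp (l * (u - \<mu>))" by (simp add: mult_exp_exp)
        then show ?thesis by (smt (verit) exp_gt_zero mult_pos_pos)
      next
        case False
        with \<open>\<delta> < \<bar>u - \<mu>\<bar>\<close> l0 have "l * \<delta> \<le> l * (\<mu> - u)" 
          by (intro mult_left_mono) auto
        then have "0 \<le> - l * \<delta> + (-l) * (u - \<mu>)" by (simp add: algebra_simps)
        then have "1 \<le> exp (- l * \<delta>) * exp ((-l) * (u - \<mu>))" by (simp add: mult_exp_exp)
        then show ?thesis by (smt (verit) exp_gt_zero mult_pos_pos)
      qed
      then have "normal_density \<mu> \<sigma> u \<le> normal_density \<mu> \<sigma> u * (exp (- l * \<delta>) * exp (l * (u - \<mu>)) + exp (- l * \<delta>) * exp ((-l) * (u - \<mu>)))"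
        using normal_density_nonneg[of \<mu> \<sigma> u] by (metis mult.right_neutral mult_left_mono)
      then have "normal_density \<mu> \<sigma> u \<le> c * normal_density (\<mu> + l * \<sigma>\<^sup>2) \<sigma> u + c * normal_density (\<mu> + (-l) * \<sigma>\<^sup>2) \<sigma> u"
        unfolding e1 e2 by (simp add: algebra_simps)
      then show ?thesis using True
        by (simp add: ennreal_plus[symmetric] c_def del: ennreal_plus)
    qed simp
  qed
  have "(\<integral>\<^sup>+u. ennreal (normal_density \<mu> \<sigma> u) * indicator {u. \<delta> < \<bar>u - \<mu>\<bar>} u \<partial>lborel)
     \<le> (\<integral>\<^sup>+u. ennreal (c * normal_density (\<mu> + l * \<sigma>\<^sup>2) \<sigma> u) + ennreal (c * normal_density (\<mu> + (-l) * \<sigma>\<^sup>2) \<sigma> u) \<partial>lborel)"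
    by (rule nn_integral_mono) (rule pw)
  also have "\<dots> = ennreal c * (\<integral>\<^sup>+u. ennreal (normal_density (\<mu> + l * \<sigma>\<^sup>2) \<sigma> u) \<partial>lborel)
       + ennreal c * (\<integral>\<^sup>+u. ennreal (normal_density (\<mu> + (-l) * \<sigma>\<^sup>2) \<sigma> u) \<partial>lborel)"
    by (subst nn_integral_add) (auto simp: ennreal_mult c_def nn_integral_cmult)
  also have "\<dots> = ennreal (2 * c)"
    using s by (simp add: nn_integral_normal_density ennreal_plus[symmetric] c_def del: ennreal_plus)
  finally show ?thesis unfolding c .
qed

abbreviation "N0 t u \<equiv> normal_density 0 (sqrt t) u"

lemma normal_density_shift: "normal_density m \<sigma> (x - a) = normal_density (m + a) \<sigma> x"
  unfolding normal_density_def by (simp add: algebra_simps)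

lemma normal_density_pos': "0 < \<sigma> \<Longrightarrow> normal_density m \<sigma> x > 0"
  by (rule normal_density_pos)

lemma single_gauss_int:
  fixes a b t r \<delta> :: real
  assumes t: "0 < t" and r: "0 < r" and tr: "t + r = 1" and d: "0 \<le> \<delta>"
  shows "(\<integral>\<^sup>+x. ennreal (N0 t (x - a) * N0 r (b - x) / N0 1 (b - a)) * indicator {x. \<delta> < \<bar>x - a - t * (b - a)\<bar>} x \<partial>lborel)
     \<le> ennreal (2 * exp (- \<delta>\<^sup>2 / (2 * (t * r))))"
proof -
  have pos: "N0 1 (b - a) > 0" by (rule normal_density_pos) simp
  have eq: "N0 t (x - a) * N0 r (b - x) / N0 1 (b - a) = normal_density (a + t * (b - a)) (sqrt (t * r)) x" for x
  proof -
    have "N0 t (x - a) * N0 r ((b - a) - (x - a)) = N0 1 (b - a) * normal_density (t * (b - a)) (sqrt (t * r)) (x - a)"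
      using gauss_mult[OF t r, of "x - a" "b - a"] tr by simp
    then show ?thesis using pos by (simp add: normal_density_shift field_simps)
  qed
  have "(\<integral>\<^sup>+x. ennreal (N0 t (x - a) * N0 r (b - x) / N0 1 (b - a)) * indicator {x. \<delta> < \<bar>x - a - t * (b - a)\<bar>} x \<partial>lborel)
    = (\<integral>\<^sup>+x. ennreal (normal_density (a + t * (b - a)) (sqrt (t * r)) x) * indicator {x. \<delta> < \<bar>x - (a + t * (b - a))\<bar>} x \<partial>lborel)"
  proof -
    have "{x. \<delta> < \<bar>x - a - t * (b - a)\<bar>} = {x. \<delta> < \<bar>x - (a + t * (b - a))\<bar>}" by (simp add: algebra_simps)
    then show ?thesis by (simp only: eq)
  qed
  also have "\<dots> \<le> ennreal (2 * exp (- \<delta>\<^sup>2 / (2 * (sqrt (t * r))\<^sup>2)))"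
    by (rule normal_tail) (use t r d in auto)
  finally show ?thesis using t r by simp
qed

lemma pair_gauss_int:
  fixes a b s h r \<delta> :: real
  assumes s: "0 < s" and h: "0 < h" and r: "0 < r" and shr: "s + h + r = 1" and d: "0 \<le> \<delta>"
  shows "(\<integral>\<^sup>+x0. \<integral>\<^sup>+x1. ennreal (N0 s (x0 - a) * N0 h (x1 - x0) * N0 r (b - x1) / N0 1 (b - a)) 
            * indicator {p. \<delta> < \<bar>snd p - fst p - h * (b - a)\<bar>} (x0, x1) \<partial>lborel \<partial>lborel)
     \<le> ennreal (2 * exp (- \<delta>\<^sup>2 / (2 * (h * (s + r)))))"
proof -
  define c where "c = b - a"
  define q where "q = s + r"
  have q: "0 < q" using s r by (simp add: q_def)
  have hq: "h + q = 1" using shr by (simp add: q_def)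
  have pos: "N0 1 c > 0" by (rule normal_density_pos) simp
  define F where "F x0 u = ennreal (normal_density (h * c) (sqrt (h * q)) u) * indicator {u. \<delta> < \<bar>u - h * c\<bar>} u
       * ennreal (normal_density (s * (c - u) / q + a) (sqrt (s * r / q)) x0)" for x0 u
  have eq: "ennreal (N0 s (x0 - a) * N0 h ((x0 + u) - x0) * N0 r (b - (x0 + u)) / N0 1 (b - a)) 
            * indicator {p. \<delta> < \<bar>snd p - fst p - h * (b - a)\<bar>} (x0, x0 + u) = F x0 u" for x0 u
  proof -
    have e1: "N0 s (x0 - a) * N0 r ((c - u) - (x0 - a)) = N0 q (c - u) * normal_density (s * (c - u) / q) (sqrt (s * r / q)) (x0 - a)"
      using gauss_mult[OF s r, of "x0 - a" "c - u"] by (simp add: q_def)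
    have e2: "N0 h u * N0 q (c - u) = N0 1 c * normal_density (h * c) (sqrt (h * q)) u"
      using gauss_mult[OF h q, of u c] hq by simp
    have "N0 s (x0 - a) * N0 h ((x0 + u) - x0) * N0 r (b - (x0 + u)) / N0 1 (b - a)
       = (N0 h u * N0 q (c - u)) * normal_density (s * (c - u) / q) (sqrt (s * r / q)) (x0 - a) / N0 1 c"
      using e1 by (simp add: c_def algebra_simps)
    also have "\<dots> = normal_density (h * c) (sqrt (h * q)) u * normal_density (s * (c - u) / q + a) (sqrt (s * r / q)) x0"
      unfolding e2 using pos by (simp add: normal_density_shift)
    finally show ?thesis unfolding F_def
      by (simp add: c_def ennreal_mult mult_ac split: split_indicator)
  qed
  have "(\<integral>\<^sup>+x0. \<integral>\<^sup>+x1. ennreal (N0 s (x0 - a) * N0 h (x1 - x0) * N0 r (b - x1) / N0 1 (b - a)) 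
            * indicator {p. \<delta> < \<bar>snd p - fst p - h * (b - a)\<bar>} (x0, x1) \<partial>lborel \<partial>lborel)
     = (\<integral>\<^sup>+x0. \<integral>\<^sup>+u. F x0 u \<partial>lborel \<partial>lborel)"
  proof (rule nn_integral_cong)
    fix x0 :: real
    show "(\<integral>\<^sup>+x1. ennreal (N0 s (x0 - a) * N0 h (x1 - x0) * N0 r (b - x1) / N0 1 (b - a)) 
            * indicator {p. \<delta> < \<bar>snd p - fst p - h * (b - a)\<bar>} (x0, x1) \<partial>lborel) = (\<integral>\<^sup>+u. F x0 u \<partial>lborel)"
    proof -
      have "(\<integral>\<^sup>+x1. ennreal (N0 s (x0 - a) * N0 h (x1 - x0) * N0 r (b - x1) / N0 1 (b - a)) 
            * indicator {p. \<delta> < \<bar>snd p - fst p - h * (b - a)\<bar>} (x0, x1) \<partial>lborel) = 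
        ennreal \<bar>1::real\<bar> * (\<integral>\<^sup>+u. ennreal (N0 s (x0 - a) * N0 h ((x0 + 1 * u) - x0) * N0 r (b - (x0 + 1 * u)) / N0 1 (b - a)) 
            * indicator {p. \<delta> < \<bar>snd p - fst p - h * (b - a)\<bar>} (x0, x0 + 1 * u) \<partial>lborel)"
        by (rule nn_integral_real_affine) auto
      also have "\<dots> = (\<integral>\<^sup>+u. F x0 u \<partial>lborel)"
        by (simp only: mult_1 abs_one eq ennreal_1 mult_1_left)
      finally show ?thesis .
    qed
  qed
  also have "\<dots> = (\<integral>\<^sup>+u. \<integral>\<^sup>+x0. F x0 u \<partial>lborel \<partial>lborel)"
    by (rule lborel_pair.Fubini'[symmetric]) (unfold F_def normal_density_def, measurable)
  also have "\<dots> = (\<integral>\<^sup>+u. ennreal (normal_density (h * c) (sqrt (h * q)) u) * indicator {u. \<delta> < \<bar>u - h * c\<bar>} u \<partial>lborel)"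
  proof (rule nn_integral_cong)
    fix u :: real
    show "(\<integral>\<^sup>+x0. F x0 u \<partial>lborel) = ennreal (normal_density (h * c) (sqrt (h * q)) u) * indicator {u. \<delta> < \<bar>u - h * c\<bar>} u"
      unfolding F_def using s r q
      by (subst nn_integral_cmult) (auto simp: nn_integral_normal_density)
  qed
  also have "\<dots> \<le> ennreal (2 * exp (- \<delta>\<^sup>2 / (2 * (sqrt (h * q))\<^sup>2)))"
    by (rule normal_tail) (use h q d in auto)
  finally show ?thesis using h q by (simp add: q_def)
qed

lemma PiM2:
  fixes f :: "real \<Rightarrow> real \<Rightarrow> ennreal"
  assumes f: "case_prod f \<in> borel_measurable (borel \<Otimes>\<^sub>M borel)"
  shows "(\<integral>\<^sup>+x. f (x 0) (x 1) \<partial>PiM {..<2::nat} (\<lambda>_. lborel)) = (\<integral>\<^sup>+x0. \<integral>\<^sup>+x1. f x0 x1 \<partial>lborel \<partial>lborel)"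
proof -
  interpret P: product_sigma_finite "\<lambda>_::nat. lborel"
    by (simp add: product_sigma_finite_def lborel.sigma_finite_measure_axioms)
  have I: "{..<2::nat} = insert 1 {0}" by auto
  have m: "(\<lambda>x. f (x 0) (x 1)) \<in> borel_measurable (PiM (insert 1 {0::nat}) (\<lambda>_. lborel))"
  proof -
    have "(\<lambda>x. (x 0, x 1)) \<in> measurable (PiM (insert 1 {0::nat}) (\<lambda>_. lborel)) (borel \<Otimes>\<^sub>M borel)"
      by measurable
    from measurable_comp[OF this f] show ?thesis by (simp add: comp_def)
  qed
  have mf: "(\<lambda>x. \<integral>\<^sup>+ y. f x y \<partial>lborel) \<in> borel_measurable borel"
    using lborel.borel_measurable_nn_integral_fst[of "case_prod f" borel] f by simp
  have A: "(\<integral>\<^sup>+x. f (x 0) (x 1) \<partial>PiM (insert 1 {0::nat}) (\<lambda>_. lborel)) = 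
     (\<integral>\<^sup>+ x. (\<integral>\<^sup>+ y. f (x 0) y \<partial>lborel) \<partial>(Pi\<^sub>M {0::nat} (\<lambda>_. lborel)))"
    using P.product_nn_integral_insert[of "{0::nat}" "1::nat" "\<lambda>x. f (x 0) (x 1)"] m by simp
  have B: "(\<integral>\<^sup>+ x. (\<integral>\<^sup>+ y. f (x 0) y \<partial>lborel) \<partial>(Pi\<^sub>M {0::nat} (\<lambda>_. lborel))) = (\<integral>\<^sup>+x0. \<integral>\<^sup>+x1. f x0 x1 \<partial>lborel \<partial>lborel)"
    by (rule P.product_nn_integral_singleton) (use mf in simp)
  show ?thesis unfolding I A B ..
qed

lemma PiM1:
  fixes f :: "real \<Rightarrow> ennreal"
  assumes f: "f \<in> borel_measurable borel"
  shows "(\<integral>\<^sup>+x. f (x 0) \<partial>PiM {..<1::nat} (\<lambda>_. lborel)) = (\<integral>\<^sup>+x0. f x0 \<partial>lborel)"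
proof -
  interpret P: product_sigma_finite "\<lambda>_::nat. lborel"
    by (simp add: product_sigma_finite_def lborel.sigma_finite_measure_axioms)
  have I: "{..<1::nat} = {0}" by auto
  show ?thesis unfolding I by (rule P.product_nn_integral_singleton) (use f in simp)
qed

lemma bes3_le:
  assumes t: "0 < t"
  shows "bes3_density t x y \<le> (if 0 < x \<and> 0 < y then (y / x) * N0 t (y - x) else 0)"
proof (cases "0 < x \<and> 0 < y")
  case True
  have "exp (- ((y - x)^2) / (2 * t)) - exp (- ((y + x)^2) / (2 * t)) \<le> exp (- ((y - x)^2) / (2 * t))"
    by simp
  then have "(y / x) * (1 / sqrt (2 * pi * t)) * (exp (- ((y - x)^2) / (2 * t)) - exp (- ((y + x)^2) / (2 * t)))
     \<le> (y / x) * (1 / sqrt (2 * pi * t)) * exp (- ((y - x)^2) / (2 * t))"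
    using True t by (intro mult_left_mono) auto
  then show ?thesis using True t unfolding bes3_density_def normal_density_def by simp
qed (auto simp: bes3_density_def)

lemma bes3_nonneg: "0 < t \<Longrightarrow> 0 \<le> bes3_density t x y"
proof -
  assume t: "0 < t"
  show ?thesis
  proof (cases "0 < x \<and> 0 < y")
    case True
    then have "(y - x)^2 \<le> (y + x)^2" by (simp add: power2_eq_square algebra_simps)
    then have "- ((y + x)^2) / (2 * t) \<le> - ((y - x)^2) / (2 * t)" using t by (simp add: divide_right_mono)
    then have "exp (- ((y + x)^2) / (2 * t)) \<le> exp (- ((y - x)^2) / (2 * t))" by simp
    then show ?thesis using True t unfolding bes3_density_def by simp
  qed (auto simp: bes3_density_def)
qed

lemma bes3_one:
  assumes a: "0 < a" and b: "0 < b"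
  shows "bes3_density 1 a b = (b / a) * N0 1 (b - a) * (1 - exp (- 2 * a * b))"
proof -
  have "- ((b + a)^2) / 2 = - ((b - a)^2) / 2 + (- 2 * a * b)" by (simp add: power2_eq_square field_simps)
  then have e: "exp (- ((b + a)^2) / (2 * 1)) = exp (- ((b - a)^2) / (2 * 1)) * exp (- 2 * a * b)"
    by (simp add: mult_exp_exp)
  have "bes3_density 1 a b = (b / a) * (1 / sqrt (2 * pi * 1)) * (exp (- ((b - a)^2) / (2 * 1)) - exp (- ((b + a)^2) / (2 * 1)))"
    using a b by (simp add: bes3_density_def)
  also have "\<dots> = (b / a) * (1 / sqrt (2 * pi * 1)) * (exp (- ((b - a)^2) / (2 * 1)) * (1 - exp (- 2 * a * b)))"
    unfolding e by (simp add: algebra_simps)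
  also have "\<dots> = (b / a) * N0 1 (b - a) * (1 - exp (- 2 * a * b))"
    by (simp add: normal_density_def)
  finally show ?thesis .
qed

lemma denom_pos:
  fixes a b :: real
  assumes a: "0 < a" and b: "0 < b"
  shows "0 < 1 - exp (- 2 * a * b)"
  using a b by simp

lemma fdd2_le:
  assumes a: "0 < a" and b: "0 < b" and s: "0 < s" and h: "0 < h" and r: "0 < r"
  shows "bes3_density s a x0 * bes3_density h x0 x1 * bes3_density r x1 b / bes3_density 1 a b
     \<le> (1 / (1 - exp (- 2 * a * b))) * (N0 s (x0 - a) * N0 h (x1 - x0) * N0 r (b - x1) / N0 1 (b - a))"
proof -
  define E where "E = 1 - exp (- 2 * a * b)"
  have E: "0 < E" unfolding E_def using a b by simp
  have Np: "0 < N0 1 (b - a)" by (rule normal_density_pos) simp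
  have D: "bes3_density 1 a b = (b / a) * N0 1 (b - a) * E" unfolding E_def by (rule bes3_one[OF a b])
  have Dp: "0 < bes3_density 1 a b" unfolding D using a b E Np by simp
  have num: "bes3_density s a x0 * bes3_density h x0 x1 * bes3_density r x1 b \<le> (b / a) * (N0 s (x0 - a) * N0 h (x1 - x0) * N0 r (b - x1))"
  proof (cases "0 < x0 \<and> 0 < x1")
    case True
    have "bes3_density s a x0 * bes3_density h x0 x1 * bes3_density r x1 b \<le> 
        ((x0 / a) * N0 s (x0 - a)) * ((x1 / x0) * N0 h (x1 - x0)) * ((b / x1) * N0 r (b - x1))"
      using bes3_le[OF s, of a x0] bes3_le[OF h, of x0 x1] bes3_le[OF r, of x1 b] True a b
        bes3_nonneg[OF s, of a x0] bes3_nonneg[OF h, of x0 x1] bes3_nonneg[OF r, of x1 b]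
      by (intro mult_mono) (auto intro!: mult_nonneg_nonneg)
    also have "\<dots> = (b / a) * (N0 s (x0 - a) * N0 h (x1 - x0) * N0 r (b - x1))"
      using True a by (simp add: field_simps)
    finally show ?thesis .
  next
    case False
    then have z: "bes3_density s a x0 * bes3_density h x0 x1 * bes3_density r x1 b = 0"
      by (auto simp: bes3_density_def)
    have "0 \<le> (b / a) * (N0 s (x0 - a) * N0 h (x1 - x0) * N0 r (b - x1))" using a b by (intro mult_nonneg_nonneg) auto
    then show ?thesis by (simp only: z)
  qed
  have "bes3_density s a x0 * bes3_density h x0 x1 * bes3_density r x1 b / bes3_density 1 a b
      \<le> (b / a) * (N0 s (x0 - a) * N0 h (x1 - x0) * N0 r (b - x1)) / bes3_density 1 a b"
    by (rule divide_right_mono) (use num Dp in auto)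
  also have "\<dots> = (1 / E) * (N0 s (x0 - a) * N0 h (x1 - x0) * N0 r (b - x1) / N0 1 (b - a))"
    unfolding D using a b E Np by (simp add: field_simps)
  finally show ?thesis unfolding E_def .
qed

lemma fdd1_le:
  assumes a: "0 < a" and b: "0 < b" and t: "0 < t" and r: "0 < r"
  shows "bes3_density t a x0 * bes3_density r x0 b / bes3_density 1 a b
     \<le> (1 / (1 - exp (- 2 * a * b))) * (N0 t (x0 - a) * N0 r (b - x0) / N0 1 (b - a))"
proof -
  define E where "E = 1 - exp (- 2 * a * b)"
  have E: "0 < E" unfolding E_def using a b by simp
  have Np: "0 < N0 1 (b - a)" by (rule normal_density_pos) simp
  have D: "bes3_density 1 a b = (b / a) * N0 1 (b - a) * E" unfolding E_def by (rule bes3_one[OF a b])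
  have Dp: "0 < bes3_density 1 a b" unfolding D using a b E Np by simp
  have num: "bes3_density t a x0 * bes3_density r x0 b \<le> (b / a) * (N0 t (x0 - a) * N0 r (b - x0))"
  proof (cases "0 < x0")
    case True
    have "bes3_density t a x0 * bes3_density r x0 b \<le> 
        ((x0 / a) * N0 t (x0 - a)) * ((b / x0) * N0 r (b - x0))"
      using bes3_le[OF t, of a x0] bes3_le[OF r, of x0 b] True a b
        bes3_nonneg[OF t, of a x0] bes3_nonneg[OF r, of x0 b]
      by (intro mult_mono) (auto intro!: mult_nonneg_nonneg)
    also have "\<dots> = (b / a) * (N0 t (x0 - a) * N0 r (b - x0))"
      using True a by (simp add: field_simps)
    finally show ?thesis .
  next
    case False
    then have z: "bes3_density t a x0 * bes3_density r x0 b = 0"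
      by (auto simp: bes3_density_def)
    have "0 \<le> (b / a) * (N0 t (x0 - a) * N0 r (b - x0))" using a b by (intro mult_nonneg_nonneg) auto
    then show ?thesis by (simp only: z)
  qed
  have "bes3_density t a x0 * bes3_density r x0 b / bes3_density 1 a b
      \<le> (b / a) * (N0 t (x0 - a) * N0 r (b - x0)) / bes3_density 1 a b"
    by (rule divide_right_mono) (use num Dp in auto)
  also have "\<dots> = (1 / E) * (N0 t (x0 - a) * N0 r (b - x0) / N0 1 (b - a))"
    unfolding D using a b E Np by (simp add: field_simps)
  finally show ?thesis unfolding E_def .
qed

lemma bes3_density_meas2: "(\<lambda>(x, y). bes3_density t x y) \<in> borel_measurable (borel \<Otimes>\<^sub>M borel)"
  unfolding bes3_density_def by measurable

lemma bes3_density_meas[measurable (raw)]: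
  assumes "f \<in> borel_measurable M" "g \<in> borel_measurable M"
  shows "(\<lambda>\<omega>. bes3_density t (f \<omega>) (g \<omega>)) \<in> borel_measurable M"
proof -
  have "(\<lambda>\<omega>. (f \<omega>, g \<omega>)) \<in> measurable M (borel \<Otimes>\<^sub>M borel)" using assms by measurable
  from measurable_comp[OF this bes3_density_meas2] show ?thesis by (simp add: comp_def)
qed

lemma fdd_meas: "0 < n \<Longrightarrow> (\<lambda>x. ennreal (bes3_bridge_fdd a b n ts x)) \<in> borel_measurable (PiM {..<n} (\<lambda>_. lborel))"
  unfolding bes3_bridge_fdd_def 
  apply (rule measurable_compose[OF _ measurable_ennreal])
  apply (intro borel_measurable_divide borel_measurable_times borel_measurable_prod bes3_density_meas)
  apply (auto intro!: measurable_component_singleton)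
  done

lemma bridge_pair_prob:
  assumes br: "bes3_bridge M X a b" and a: "0 < a" and b: "0 < b"
    and st: "0 < s" "s < t" "t < 1" and d: "0 \<le> \<delta>"
  shows "emeasure M {\<omega> \<in> space M. \<delta> < \<bar>X t \<omega> - X s \<omega> - (t - s) * (b - a)\<bar>}
     \<le> ennreal ((1 / (1 - exp (- 2 * a * b))) * (2 * exp (- \<delta>\<^sup>2 / (2 * ((t - s) * (s + (1 - t)))))))"
proof -
  define K where "K = 1 / (1 - exp (- 2 * a * b))"
  have K: "0 < K" unfolding K_def using a b by simp
  from br have meas: "\<And>t. t \<in> {0..1} \<Longrightarrow> X t \<in> borel_measurable M"
    and fdd: "\<And>n ts. 0 < n \<Longrightarrow> 0 < ts 0 \<Longrightarrow> ts (n - 1) < 1 \<Longrightarrow> (\<forall>i. Suc i < n \<longrightarrow> ts i < ts (Suc i)) \<Longrightarrow>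
        distr M (PiM {..<n} (\<lambda>_. borel)) (\<lambda>\<omega>. \<lambda>i\<in>{..<n}. X (ts i) \<omega>) =
        density (PiM {..<n} (\<lambda>_. lborel)) (\<lambda>x. ennreal (bes3_bridge_fdd a b n ts x))"
    unfolding bes3_bridge_def by auto
  define ts where "ts = (\<lambda>i::nat. if i = 0 then s else t)"
  have D: "distr M (PiM {..<2::nat} (\<lambda>_. borel)) (\<lambda>\<omega>. \<lambda>i\<in>{..<2}. X (ts i) \<omega>) =
        density (PiM {..<2::nat} (\<lambda>_. lborel)) (\<lambda>x. ennreal (bes3_bridge_fdd a b 2 ts x))"
    by (rule fdd) (use st in \<open>auto simp: ts_def less_Suc_eq\<close>)
  define S where "S = {x \<in> space (PiM {..<2::nat} (\<lambda>_. borel::real measure)). \<delta> < \<bar>x 1 - x 0 - (t - s) * (b - a)\<bar>}"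
  have Ssets: "S \<in> sets (PiM {..<2::nat} (\<lambda>_. borel))" unfolding S_def by measurable
  have Ssets': "S \<in> sets (PiM {..<2::nat} (\<lambda>_. lborel))" using Ssets by (simp cong: sets_PiM_cong)
  have Phim: "(\<lambda>\<omega>. \<lambda>i\<in>{..<2::nat}. X (ts i) \<omega>) \<in> measurable M (PiM {..<2::nat} (\<lambda>_. borel))"
    by (rule measurable_restrict) (use st in \<open>auto simp: ts_def intro!: meas\<close>)
  have pre: "{\<omega> \<in> space M. \<delta> < \<bar>X t \<omega> - X s \<omega> - (t - s) * (b - a)\<bar>} = (\<lambda>\<omega>. \<lambda>i\<in>{..<2::nat}. X (ts i) \<omega>) -` S \<inter> space M"
    unfolding S_def ts_def by (auto simp: space_PiM)
  define g where "g x0 x1 = ennreal (N0 s (x0 - a) * N0 (t - s) (x1 - x0) * N0 (1 - t) (b - x1) / N0 1 (b - a)) 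
            * indicator {p. \<delta> < \<bar>snd p - fst p - (t - s) * (b - a)\<bar>} (x0, x1)" for x0 x1
  have gm: "case_prod g \<in> borel_measurable (borel \<Otimes>\<^sub>M borel)"
    unfolding g_def normal_density_def by measurable
  have gm2: "(\<lambda>x. g (x 0) (x 1)) \<in> borel_measurable (PiM {..<2::nat} (\<lambda>_. lborel))"
  proof -
    have "(\<lambda>x. (x 0, x 1)) \<in> measurable (PiM {..<2::nat} (\<lambda>_. lborel)) (borel \<Otimes>\<^sub>M borel)"
      by measurable
    from measurable_comp[OF this gm] show ?thesis by (simp add: comp_def)
  qed
  have "emeasure M {\<omega> \<in> space M. \<delta> < \<bar>X t \<omega> - X s \<omega> - (t - s) * (b - a)\<bar>} 
      = emeasure (distr M (PiM {..<2::nat} (\<lambda>_. borel)) (\<lambda>\<omega>. \<lambda>i\<in>{..<2}. X (ts i) \<omega>)) S"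
    unfolding pre by (rule emeasure_distr[symmetric]) (fact Phim, fact Ssets)
  also have "\<dots> = (\<integral>\<^sup>+x. ennreal (bes3_bridge_fdd a b 2 ts x) * indicator S x \<partial>PiM {..<2::nat} (\<lambda>_. lborel))"
    unfolding D by (rule emeasure_density) (rule fdd_meas, simp, fact Ssets')
  also have "\<dots> \<le> (\<integral>\<^sup>+x. ennreal K * g (x 0) (x 1) \<partial>PiM {..<2::nat} (\<lambda>_. lborel))"
  proof (rule nn_integral_mono)
    fix x :: "nat \<Rightarrow> real"
    assume x: "x \<in> space (PiM {..<2::nat} (\<lambda>_. lborel))"
    have f: "bes3_bridge_fdd a b 2 ts x = bes3_density s a (x 0) * bes3_density (t - s) (x 0) (x 1) * bes3_density (1 - t) (x 1) b / bes3_density 1 a b"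
      unfolding bes3_bridge_fdd_def ts_def by (simp add: numeral_2_eq_2)
    have le: "bes3_bridge_fdd a b 2 ts x \<le> K * (N0 s (x 0 - a) * N0 (t - s) (x 1 - x 0) * N0 (1 - t) (b - x 1) / N0 1 (b - a))"
      unfolding f K_def by (rule fdd2_le) (use a b st in auto)
    have ind: "indicator S x = (indicator {p. \<delta> < \<bar>snd p - fst p - (t - s) * (b - a)\<bar>} (x 0, x 1) :: ennreal)"
      using x unfolding S_def by (simp add: space_PiM split: split_indicator)
    show "ennreal (bes3_bridge_fdd a b 2 ts x) * indicator S x \<le> ennreal K * g (x 0) (x 1)"
      unfolding ind g_def using le K
      by (auto simp: ennreal_mult[symmetric] split: split_indicator intro!: ennreal_leI)
  qed
  also have "\<dots> = ennreal K * (\<integral>\<^sup>+x. g (x 0) (x 1) \<partial>PiM {..<2::nat} (\<lambda>_. lborel))"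
    by (rule nn_integral_cmult) (fact gm2)
  also have "\<dots> = ennreal K * (\<integral>\<^sup>+x0. \<integral>\<^sup>+x1. g x0 x1 \<partial>lborel \<partial>lborel)"
    by (simp only: PiM2[OF gm])
  also have "\<dots> \<le> ennreal K * ennreal (2 * exp (- \<delta>\<^sup>2 / (2 * ((t - s) * (s + (1 - t))))))"
    unfolding g_def by (intro mult_left_mono pair_gauss_int) (use st d in auto)
  also have "\<dots> = ennreal (K * (2 * exp (- \<delta>\<^sup>2 / (2 * ((t - s) * (s + (1 - t)))))))"
    using K by (simp add: ennreal_mult)
  finally show ?thesis unfolding K_def .
qed

lemma bridge_single_prob:
  assumes br: "bes3_bridge M X a b" and a: "0 < a" and b: "0 < b"
    and st: "0 < t" "t < 1" and d: "0 \<le> \<delta>"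
  shows "emeasure M {\<omega> \<in> space M. \<delta> < \<bar>X t \<omega> - a - t * (b - a)\<bar>}
     \<le> ennreal ((1 / (1 - exp (- 2 * a * b))) * (2 * exp (- \<delta>\<^sup>2 / (2 * (t * (1 - t))))))"
proof -
  define K where "K = 1 / (1 - exp (- 2 * a * b))"
  have K: "0 < K" unfolding K_def using a b by simp
  from br have meas: "\<And>t. t \<in> {0..1} \<Longrightarrow> X t \<in> borel_measurable M"
    and fdd: "\<And>n ts. 0 < n \<Longrightarrow> 0 < ts 0 \<Longrightarrow> ts (n - 1) < 1 \<Longrightarrow> (\<forall>i. Suc i < n \<longrightarrow> ts i < ts (Suc i)) \<Longrightarrow>
        distr M (PiM {..<n} (\<lambda>_. borel)) (\<lambda>\<omega>. \<lambda>i\<in>{..<n}. X (ts i) \<omega>) =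
        density (PiM {..<n} (\<lambda>_. lborel)) (\<lambda>x. ennreal (bes3_bridge_fdd a b n ts x))"
    unfolding bes3_bridge_def by auto
  define ts where "ts = (\<lambda>i::nat. t)"
  have D: "distr M (PiM {..<1::nat} (\<lambda>_. borel)) (\<lambda>\<omega>. \<lambda>i\<in>{..<1}. X (ts i) \<omega>) =
        density (PiM {..<1::nat} (\<lambda>_. lborel)) (\<lambda>x. ennreal (bes3_bridge_fdd a b 1 ts x))"
    by (rule fdd) (use st in \<open>auto simp: ts_def\<close>)
  define S where "S = {x \<in> space (PiM {..<1::nat} (\<lambda>_. borel::real measure)). \<delta> < \<bar>x 0 - a - t * (b - a)\<bar>}"
  have Ssets: "S \<in> sets (PiM {..<1::nat} (\<lambda>_. borel))" unfolding S_def by measurable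
  have Ssets': "S \<in> sets (PiM {..<1::nat} (\<lambda>_. lborel))" using Ssets by (simp cong: sets_PiM_cong)
  have Phim: "(\<lambda>\<omega>. \<lambda>i\<in>{..<1::nat}. X (ts i) \<omega>) \<in> measurable M (PiM {..<1::nat} (\<lambda>_. borel))"
    by (rule measurable_restrict) (use st in \<open>auto simp: ts_def intro!: meas\<close>)
  have pre: "{\<omega> \<in> space M. \<delta> < \<bar>X t \<omega> - a - t * (b - a)\<bar>} = (\<lambda>\<omega>. \<lambda>i\<in>{..<1::nat}. X (ts i) \<omega>) -` S \<inter> space M"
    unfolding S_def ts_def by (auto simp: space_PiM)
  define g where "g x0 = ennreal (N0 t (x0 - a) * N0 (1 - t) (b - x0) / N0 1 (b - a)) 
            * indicator {x. \<delta> < \<bar>x - a - t * (b - a)\<bar>} x0" for x0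
  have gm: "g \<in> borel_measurable borel"
    unfolding g_def normal_density_def by measurable
  have gm2: "(\<lambda>x. g (x 0)) \<in> borel_measurable (PiM {..<1::nat} (\<lambda>_. lborel))"
    using gm by measurable
  have "emeasure M {\<omega> \<in> space M. \<delta> < \<bar>X t \<omega> - a - t * (b - a)\<bar>} 
      = emeasure (distr M (PiM {..<1::nat} (\<lambda>_. borel)) (\<lambda>\<omega>. \<lambda>i\<in>{..<1}. X (ts i) \<omega>)) S"
    unfolding pre by (rule emeasure_distr[symmetric]) (fact Phim, fact Ssets)
  also have "\<dots> = (\<integral>\<^sup>+x. ennreal (bes3_bridge_fdd a b 1 ts x) * indicator S x \<partial>PiM {..<1::nat} (\<lambda>_. lborel))"
    unfolding D by (rule emeasure_density) (rule fdd_meas, simp, fact Ssets')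
  also have "\<dots> \<le> (\<integral>\<^sup>+x. ennreal K * g (x 0) \<partial>PiM {..<1::nat} (\<lambda>_. lborel))"
  proof (rule nn_integral_mono)
    fix x :: "nat \<Rightarrow> real"
    assume x: "x \<in> space (PiM {..<1::nat} (\<lambda>_. lborel))"
    have f: "bes3_bridge_fdd a b 1 ts x = bes3_density t a (x 0) * bes3_density (1 - t) (x 0) b / bes3_density 1 a b"
      unfolding bes3_bridge_fdd_def ts_def by simp
    have le: "bes3_bridge_fdd a b 1 ts x \<le> K * (N0 t (x 0 - a) * N0 (1 - t) (b - x 0) / N0 1 (b - a))"
      unfolding f K_def by (rule fdd1_le) (use a b st in auto)
    have ind: "indicator S x = (indicator {x. \<delta> < \<bar>x - a - t * (b - a)\<bar>} (x 0) :: ennreal)"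
      using x unfolding S_def by (simp add: space_PiM split: split_indicator)
    show "ennreal (bes3_bridge_fdd a b 1 ts x) * indicator S x \<le> ennreal K * g (x 0)"
      unfolding ind g_def using le K
      by (auto simp: ennreal_mult[symmetric] split: split_indicator intro!: ennreal_leI)
  qed
  also have "\<dots> = ennreal K * (\<integral>\<^sup>+x. g (x 0) \<partial>PiM {..<1::nat} (\<lambda>_. lborel))"
    by (rule nn_integral_cmult) (fact gm2)
  also have "\<dots> = ennreal K * (\<integral>\<^sup>+x0. g x0 \<partial>lborel)"
    by (simp only: PiM1[OF gm])
  also have "\<dots> \<le> ennreal K * ennreal (2 * exp (- \<delta>\<^sup>2 / (2 * (t * (1 - t)))))"
    unfolding g_def by (intro mult_left_mono single_gauss_int) (use st d in auto)
  also have "\<dots> = ennreal (K * (2 * exp (- \<delta>\<^sup>2 / (2 * (t * (1 - t))))))"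
    using K by (simp add: ennreal_mult)
  finally show ?thesis unfolding K_def .
qed

definition "okj k j \<longleftrightarrow> 0 < j \<and> 8 * (j + 1) < 7 * (2::nat) ^ k"

lemma chain_nat:
  fixes f :: "real \<Rightarrow> real" and \<beta> :: real
  assumes inc: "\<And>k j. k1 \<le> k \<Longrightarrow> okj k j \<Longrightarrow>
      \<bar>f (real (j + 1) / 2 ^ k) - f (real j / 2 ^ k)\<bar> \<le> \<beta> * (3/4) ^ (k - k1)"
    and b: "0 \<le> \<beta>"
  shows "0 < p \<Longrightarrow> p \<le> q \<Longrightarrow> 8 * q < 7 * 2 ^ (k1 + n) \<Longrightarrow> q - p \<le> 2 ^ n \<Longrightarrow>
      \<bar>f (real q / 2 ^ (k1 + n)) - f (real p / 2 ^ (k1 + n))\<bar> \<le> 8 * \<beta> * (1 - (3/4) ^ (n + 1))"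
proof (induction n arbitrary: p q)
  case 0
  then have "q = p \<or> q = p + 1" by auto
  then show ?case
  proof
    assume "q = p" then show ?thesis using b by simp
  next
    assume q: "q = p + 1"
    have "okj k1 p" using 0 q by (simp add: okj_def)
    from inc[OF _ this] have "\<bar>f (real (p + 1) / 2 ^ k1) - f (real p / 2 ^ k1)\<bar> \<le> \<beta>" by simp
    then show ?thesis using q b by simp
  qed
next
  case (Suc n)
  define m where "m = k1 + n"
  have m1: "k1 + Suc n = Suc m" by (simp add: m_def)
  define p' where "p' = (p + 1) div 2"
  define q' where "q' = q div 2"
  define d where "d = \<beta> * (3/4) ^ (n + 1)"
  have d0: "0 \<le> d" using b by (simp add: d_def)
  show ?case
  proof (cases "p' \<le> q'")
    case False
    then have "p = q" using Suc.prems(2) unfolding p'_def q'_def by presburger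
    moreover have "(3/4::real) ^ (Suc n + 1) \<le> 1" by (rule power_le_one) auto
    then have "0 \<le> 8 * \<beta> * (1 - (3/4) ^ (Suc n + 1))" using b by (intro mult_nonneg_nonneg) auto
    ultimately show ?thesis by simp
  next
    case True
    have p'0: "0 < p'" using Suc.prems(1) by (simp add: p'_def)
    have q'b: "8 * q' < 7 * 2 ^ (k1 + n)" using Suc.prems(3) unfolding q'_def by (simp add: m_def)
    have qp: "q' - p' \<le> 2 ^ n" using Suc.prems(4) unfolding p'_def q'_def by simp
    have IH: "\<bar>f (real q' / 2 ^ (k1 + n)) - f (real p' / 2 ^ (k1 + n))\<bar> \<le> 8 * \<beta> * (1 - (3/4) ^ (n + 1))"
      by (rule Suc.IH) (use p'0 True q'b qp in auto)
    have e1: "real q' / 2 ^ (k1 + n) = real (2 * q') / 2 ^ Suc m" by (simp add: m_def)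
    have e2: "real p' / 2 ^ (k1 + n) = real (2 * p') / 2 ^ Suc m" by (simp add: m_def)
    have inc': "\<bar>f (real (j + 1) / 2 ^ Suc m) - f (real j / 2 ^ Suc m)\<bar> \<le> d" if "okj (Suc m) j" for j
      using inc[OF _ that] by (simp add: d_def m_def)
    have P: "\<bar>f (real (2 * p') / 2 ^ Suc m) - f (real p / 2 ^ Suc m)\<bar> \<le> d"
    proof (cases "2 * p' = p")
      case True then show ?thesis using d0 by simp
    next
      case False
      then have "2 * p' = p + 1" unfolding p'_def by presburger
      moreover have "okj (Suc m) p" unfolding okj_def using Suc.prems(1,3) True \<open>2 * p' = p + 1\<close> unfolding q'_def m1
        by auto
      ultimately show ?thesis using inc'[of p] by simp
    qed
    have Q: "\<bar>f (real q / 2 ^ Suc m) - f (real (2 * q') / 2 ^ Suc m)\<bar> \<le> d"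
    proof (cases "2 * q' = q")
      case True then show ?thesis using d0 by simp
    next
      case False
      then have "q = 2 * q' + 1" unfolding q'_def by presburger
      moreover have "okj (Suc m) (2 * q')" unfolding okj_def using Suc.prems(3) p'0 True \<open>q = 2 * q' + 1\<close> unfolding m1
        by auto
      ultimately show ?thesis using inc'[of "2 * q'"] by simp
    qed
    have "\<bar>f (real q / 2 ^ Suc m) - f (real p / 2 ^ Suc m)\<bar> \<le> 
        \<bar>f (real q / 2 ^ Suc m) - f (real (2 * q') / 2 ^ Suc m)\<bar> + \<bar>f (real (2 * q') / 2 ^ Suc m) - f (real (2 * p') / 2 ^ Suc m)\<bar>
        + \<bar>f (real (2 * p') / 2 ^ Suc m) - f (real p / 2 ^ Suc m)\<bar>" by linarith
    also have "\<dots> \<le> d + 8 * \<beta> * (1 - (3/4) ^ (n + 1)) + d" using P Q IH e1 e2 by simp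
    also have "\<dots> = 8 * \<beta> * (1 - (3/4) ^ (Suc n + 1))" by (simp add: d_def algebra_simps)
    finally show ?thesis unfolding m1 .
  qed
qed

lemma dy_bounds:
  fixes s :: real assumes "0 \<le> s"
  shows "s * 2 ^ m < real (nat \<lfloor>s * 2 ^ m\<rfloor> + 1)" "real (nat \<lfloor>s * 2 ^ m\<rfloor> + 1) \<le> s * 2 ^ m + 1"
proof -
  have "0 \<le> s * 2 ^ m" using assms by simp
  then have e: "real (nat \<lfloor>s * 2 ^ m\<rfloor>) = of_int \<lfloor>s * 2 ^ m\<rfloor>" by simp
  show "s * 2 ^ m < real (nat \<lfloor>s * 2 ^ m\<rfloor> + 1)" using e by (simp, linarith)
  show "real (nat \<lfloor>s * 2 ^ m\<rfloor> + 1) \<le> s * 2 ^ m + 1" using e by simp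
qed

lemma dy_lim:
  fixes s :: real assumes "0 \<le> s"
  shows "(\<lambda>m. real (nat \<lfloor>s * 2 ^ m\<rfloor> + 1) / 2 ^ m) \<longlonglongrightarrow> s"
proof (rule tendsto_sandwich[where f="\<lambda>_. s" and h="\<lambda>m. s + (1/2) ^ m"])
  show "\<forall>\<^sub>F m in sequentially. s \<le> real (nat \<lfloor>s * 2 ^ m\<rfloor> + 1) / 2 ^ m"
    using dy_bounds(1)[OF assms] by (auto simp: field_simps less_imp_le)
  show "\<forall>\<^sub>F m in sequentially. real (nat \<lfloor>s * 2 ^ m\<rfloor> + 1) / 2 ^ m \<le> s + (1/2) ^ m"
    using dy_bounds(2)[OF assms] by (auto simp: field_simps power_divide)
  have "(\<lambda>m. s + (1/2::real) ^ m) \<longlonglongrightarrow> s + 0"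
    by (intro tendsto_intros LIMSEQ_realpow_zero) auto
  then show "(\<lambda>m. s + (1/2::real) ^ m) \<longlonglongrightarrow> s" by simp
qed simp

lemma chain_real:
  fixes f :: "real \<Rightarrow> real" and \<beta> :: real
  assumes cont: "continuous_on {0..1} f"
    and inc: "\<And>k j. k1 \<le> k \<Longrightarrow> okj k j \<Longrightarrow>
      \<bar>f (real (j + 1) / 2 ^ k) - f (real j / 2 ^ k)\<bar> \<le> \<beta> * (3/4) ^ (k - k1)"
    and b: "0 \<le> \<beta>"
    and s: "0 \<le> s" "s \<le> 5/8" and t: "t \<le> 5/8" and st: "s \<le> t" and d: "2 * (t - s) * 2 ^ k1 \<le> 1"
  shows "\<bar>f t - f s\<bar> \<le> 8 * \<beta>"
proof -
  have t0: "0 \<le> t" using s st by simp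
  define P where "P m = nat \<lfloor>s * 2 ^ m\<rfloor> + 1" for m :: nat
  define Q where "Q m = nat \<lfloor>t * 2 ^ m\<rfloor> + 1" for m :: nat
  have bnd: "\<bar>f (real (Q m) / 2 ^ m) - f (real (P m) / 2 ^ m)\<bar> \<le> 8 * \<beta>" if m: "k1 + 3 \<le> m" for m
  proof -
    define n where "n = m - k1"
    have mn: "m = k1 + n" and n3: "3 \<le> n" using m by (auto simp: n_def)
    have P0: "0 < P m" by (simp add: P_def)
    have PQ: "P m \<le> Q m" unfolding P_def Q_def using st by (intro add_right_mono nat_mono floor_mono) simp
    have "(8::real) \<le> 2 ^ m" using power_increasing[of 3 m "2::real"] m by simp
    moreover have q1: "real (Q m) \<le> t * 2 ^ m + 1" using dy_bounds(2)[OF t0, of m] unfolding Q_def .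
    moreover have "t * 2 ^ m \<le> 5/8 * 2 ^ m" using t by (intro mult_right_mono) auto
    ultimately have "8 * real (Q m) < 7 * 2 ^ m" by linarith
    then have "real (8 * Q m) < real (7 * 2 ^ m)" by simp
    then have Qb: "8 * Q m < 7 * 2 ^ (k1 + n)" unfolding mn of_nat_less_iff .
    have "real (Q m) - real (P m) < (t - s) * 2 ^ m + 1"
      using dy_bounds[OF s(1), of m] dy_bounds[OF t0, of m] unfolding P_def Q_def by (simp add: algebra_simps)
    also have "(t - s) * 2 ^ m = (2 * (t - s) * 2 ^ k1) * 2 ^ n / 2" by (simp add: mn power_add)
    also have "\<dots> \<le> 1 * 2 ^ n / 2" using d by (intro divide_right_mono mult_right_mono) auto
    finally have "real (Q m - P m) < 2 ^ n / 2 + 1" using PQ by (simp add: of_nat_diff)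
    moreover have "(2::real) \<le> 2 ^ n" using power_increasing[of 1 n "2::real"] n3 by simp
    ultimately have "real (Q m - P m) < real (2 ^ n + 1)" by simp
    then have QP: "Q m - P m \<le> 2 ^ n" by linarith
    have "\<bar>f (real (Q m) / 2 ^ (k1 + n)) - f (real (P m) / 2 ^ (k1 + n))\<bar> \<le> 8 * \<beta> * (1 - (3/4) ^ (n + 1))"
      by (rule chain_nat[OF inc b P0 PQ Qb QP])
    also have "\<dots> \<le> 8 * \<beta>" using b by (simp add: mult_left_le)
    finally show ?thesis unfolding mn .
  qed
  have lP: "(\<lambda>m. real (P m) / 2 ^ m) \<longlonglongrightarrow> s" unfolding P_def by (rule dy_lim[OF s(1)])
  have lQ: "(\<lambda>m. real (Q m) / 2 ^ m) \<longlonglongrightarrow> t" unfolding Q_def by (rule dy_lim[OF t0])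
  have inP: "\<forall>\<^sub>F m in sequentially. real (P m) / 2 ^ m \<in> {0..1}"
  proof (rule eventually_sequentiallyI[of 2])
    fix m :: nat assume "2 \<le> m"
    then have "(4::real) \<le> 2 ^ m" using power_increasing[of 2 m "2::real"] by simp
    then have "real (P m) \<le> 5/8 * 2 ^ m + 1" using dy_bounds(2)[OF s(1), of m] s unfolding P_def
      by (smt (verit) mult_right_mono zero_le_power)
    also have "\<dots> \<le> 2 ^ m" using \<open>4 \<le> 2 ^ m\<close> by simp
    finally show "real (P m) / 2 ^ m \<in> {0..1}" by simp
  qed
  have inQ: "\<forall>\<^sub>F m in sequentially. real (Q m) / 2 ^ m \<in> {0..1}"
  proof (rule eventually_sequentiallyI[of 2])
    fix m :: nat assume "2 \<le> m"
    then have "(4::real) \<le> 2 ^ m" using power_increasing[of 2 m "2::real"] by simp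
    then have "real (Q m) \<le> 5/8 * 2 ^ m + 1" using dy_bounds(2)[OF t0, of m] t unfolding Q_def
      by (smt (verit) mult_right_mono zero_le_power)
    also have "\<dots> \<le> 2 ^ m" using \<open>4 \<le> 2 ^ m\<close> by simp
    finally show "real (Q m) / 2 ^ m \<in> {0..1}" by simp
  qed
  have fP: "(\<lambda>m. f (real (P m) / 2 ^ m)) \<longlonglongrightarrow> f s"
    using continuous_on_tendsto_compose[OF cont lP _ inP] s by simp
  have fQ: "(\<lambda>m. f (real (Q m) / 2 ^ m)) \<longlonglongrightarrow> f t"
    using continuous_on_tendsto_compose[OF cont lQ _ inQ] t t0 by simp
  have "(\<lambda>m. \<bar>f (real (Q m) / 2 ^ m) - f (real (P m) / 2 ^ m)\<bar>) \<longlonglongrightarrow> \<bar>f t - f s\<bar>"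
    by (intro tendsto_intros fP fQ)
  then show ?thesis
    by (rule tendsto_upperbound) (auto intro!: eventually_sequentiallyI[of "k1 + 3"] bnd)
qed

lemma level_sum:
  fixes U :: "nat \<Rightarrow> 'a set"
  assumes sets: "\<And>i. U i \<in> sets M"
    and bnd: "\<And>i. emeasure M (U i) \<le> ennreal (2 ^ (k1 + i) * (2 * Kf * exp (- (D * (1 + real i / 8)))))"
    and Kf: "0 \<le> Kf" and D: "2 * exp (- D / 8) \<le> 1/2"
  shows "emeasure M (\<Union>i. U i) \<le> ennreal (4 * Kf * 2 ^ k1 * exp (- D))"
proof -
  define q where "q = 2 * exp (- D / 8)"
  have q0: "0 \<le> q" and q1: "q \<le> 1/2" using D by (auto simp: q_def)
  define g where "g i = (2 * Kf * 2 ^ k1 * exp (- D)) * q ^ i" for i :: nat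
  have eq: "2 ^ (k1 + i) * (2 * Kf * exp (- (D * (1 + real i / 8)))) = g i" for i
  proof -
    have "exp (- (D * (1 + real i / 8))) = exp (- D) * exp (real i * (- D / 8))"
      unfolding mult_exp_exp by (simp add: algebra_simps)
    also have "\<dots> = exp (- D) * exp (- D / 8) ^ i" by (simp only: exp_of_nat_mult)
    finally show ?thesis unfolding g_def q_def by (simp add: power_add power_mult_distrib)
  qed
  have sq: "summable (\<lambda>i. q ^ i)" using q0 q1 by (intro summable_geometric) auto
  have sg: "summable g" unfolding g_def by (intro summable_mult sq)
  have g0: "0 \<le> g i" for i unfolding g_def using Kf q0 by simp
  have "emeasure M (\<Union>i. U i) \<le> (\<Sum>i. emeasure M (U i))"
    by (rule emeasure_subadditive_countably) (use sets in auto)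
  also have "\<dots> \<le> (\<Sum>i. ennreal (g i))"
    by (intro suminf_le) (use bnd eq in auto)
  also have "\<dots> = ennreal (\<Sum>i. g i)" by (rule suminf_ennreal2) (use g0 sg in auto)
  also have "\<dots> \<le> ennreal (4 * Kf * 2 ^ k1 * exp (- D))"
  proof (rule ennreal_leI)
    have "(\<Sum>i. g i) = (2 * Kf * 2 ^ k1 * exp (- D)) * (1 / (1 - q))"
      unfolding g_def using sq q0 q1 by (simp add: suminf_mult suminf_geometric)
    also have "\<dots> \<le> (2 * Kf * 2 ^ k1 * exp (- D)) * 2"
      using q0 q1 Kf by (intro mult_left_mono) (auto simp: field_simps)
    finally show "(\<Sum>i. g i) \<le> 4 * Kf * 2 ^ k1 * exp (- D)" by (simp add: mult_ac)
  qed
  finally show ?thesis .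
qed

lemma finite_okj: "finite {j. okj k j}"
  by (rule finite_subset[of _ "{..<2^k}"]) (auto simp: okj_def)

lemma card_okj: "card {j. okj k j} \<le> 2 ^ k"
proof -
  have "card {j. okj k j} \<le> card {..<2^k::nat}"
    by (rule card_mono) (auto simp: okj_def)
  then show ?thesis by simp
qed

lemma level_union:
  fixes A :: "nat \<Rightarrow> 'a set"
  assumes sets: "\<And>j. okj k j \<Longrightarrow> A j \<in> sets M"
    and bnd: "\<And>j. okj k j \<Longrightarrow> emeasure M (A j) \<le> ennreal p" and p: "0 \<le> p"
  shows "emeasure M (\<Union>j\<in>{j. okj k j}. A j) \<le> ennreal (2 ^ k * p)"
proof -
  have "emeasure M (\<Union>j\<in>{j. okj k j}. A j) \<le> (\<Sum>j\<in>{j. okj k j}. emeasure M (A j))"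
    by (rule emeasure_subadditive_finite) (use sets finite_okj in auto)
  also have "\<dots> \<le> (\<Sum>j\<in>{j. okj k j}. ennreal p)" by (intro sum_mono bnd) auto
  also have "\<dots> = ennreal (real (card {j. okj k j}) * p)" using p by (simp add: ennreal_mult ennreal_of_nat_eq_real_of_nat)
  also have "\<dots> \<le> ennreal (2 ^ k * p)"
    using card_okj[of k] p by (intro ennreal_leI mult_right_mono) (auto simp flip: of_nat_le_iff)
  finally show ?thesis .
qed

lemma incr_prob:
  assumes br: "bes3_bridge M X a b" and a: "0 < a" and b: "0 < b" and j: "okj (k1 + i) j" and be: "0 \<le> \<beta>"
  shows "emeasure M {\<omega> \<in> space M. \<beta> * (3/4) ^ i < \<bar>X (real (j + 1) / 2 ^ (k1 + i)) \<omega> - X (real j / 2 ^ (k1 + i)) \<omega>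
      - (real (j + 1) / 2 ^ (k1 + i) - real j / 2 ^ (k1 + i)) * (b - a)\<bar>}
   \<le> ennreal ((1 / (1 - exp (- 2 * a * b))) * (2 * exp (- ((\<beta>\<^sup>2 * 2 ^ k1 / 2) * (1 + real i / 8)))))"
proof -
  define k where "k = k1 + i"
  define s where "s = real j / 2 ^ k"
  define t where "t = real (j + 1) / 2 ^ k"
  define h where "h = (1::real) / 2 ^ k"
  have jpos: "0 < j" and jk: "8 * (j + 1) < 7 * 2 ^ k" using j by (auto simp: okj_def k_def)
  have s0: "0 < s" using jpos by (simp add: s_def)
  have st: "s < t" by (simp add: s_def t_def divide_strict_right_mono)
  have "real (8 * (j + 1)) < real (7 * 2 ^ k)" using jk by (simp only: of_nat_less_iff)
  then have t1: "t < 1" by (simp add: t_def field_simps)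
  have ht: "t - s = h" by (simp add: s_def t_def h_def diff_divide_distrib[symmetric])
  have h0: "0 < h" by (simp add: h_def)
  have sr: "s + (1 - t) = 1 - h" using ht by simp
  have h1: "1 - h > 0" using s0 t1 ht by simp
  define \<delta> where "\<delta> = \<beta> * (3/4) ^ i"
  have d0: "0 \<le> \<delta>" using be by (simp add: \<delta>_def)
  have P: "emeasure M {\<omega> \<in> space M. \<delta> < \<bar>X t \<omega> - X s \<omega> - (t - s) * (b - a)\<bar>}
     \<le> ennreal ((1 / (1 - exp (- 2 * a * b))) * (2 * exp (- \<delta>\<^sup>2 / (2 * ((t - s) * (s + (1 - t)))))))"
    by (rule bridge_pair_prob[OF br a b s0 st t1 d0])
  have "\<delta>\<^sup>2 / (2 * h) \<le> \<delta>\<^sup>2 / (2 * (h * (1 - h)))"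
    using h0 h1 d0 by (intro divide_left_mono mult_left_mono mult_pos_pos) (auto simp: mult_le_cancel_left1)
  moreover have "\<delta>\<^sup>2 / (2 * h) = (\<beta>\<^sup>2 * 2 ^ k1 / 2) * (9/8) ^ i"
  proof -
    have "\<delta>\<^sup>2 / (2 * h) = \<beta>\<^sup>2 * (((3/4) ^ i)\<^sup>2 * 2 ^ i) * 2 ^ k1 / 2"
      by (simp add: \<delta>_def h_def k_def power_add power_mult_distrib field_simps)
    also have "((3/4::real) ^ i)\<^sup>2 * 2 ^ i = (9/8) ^ i"
    proof -
      have "((3/4::real) ^ i)\<^sup>2 = ((3/4)\<^sup>2) ^ i" by (metis power_mult mult.commute)
      also have "\<dots> = (9/16) ^ i" by (simp add: power2_eq_square)
      finally have "((3/4::real) ^ i)\<^sup>2 * 2 ^ i = (9/16) ^ i * 2 ^ i" by simp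
      also have "\<dots> = (9/16 * 2) ^ i" by (simp only: power_mult_distrib)
      finally show ?thesis by simp
    qed
    finally show ?thesis by simp
  qed
  moreover have "1 + real i / 8 \<le> (9/8) ^ i"
    using Bernoulli_inequality[of "1/8" i] by simp
  then have "(\<beta>\<^sup>2 * 2 ^ k1 / 2) * (1 + real i / 8) \<le> (\<beta>\<^sup>2 * 2 ^ k1 / 2) * (9/8) ^ i"
    by (intro mult_left_mono) auto
  ultimately have ex: "(\<beta>\<^sup>2 * 2 ^ k1 / 2) * (1 + real i / 8) \<le> \<delta>\<^sup>2 / (2 * ((t - s) * (s + (1 - t))))"
    unfolding ht sr by linarith
  have K: "0 \<le> 1 / (1 - exp (- 2 * a * b))" using a b by simp
  have "ennreal ((1 / (1 - exp (- 2 * a * b))) * (2 * exp (- \<delta>\<^sup>2 / (2 * ((t - s) * (s + (1 - t)))))))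
     \<le> ennreal ((1 / (1 - exp (- 2 * a * b))) * (2 * exp (- ((\<beta>\<^sup>2 * 2 ^ k1 / 2) * (1 + real i / 8)))))"
    using ex K by (intro ennreal_leI mult_left_mono) auto
  with P show ?thesis unfolding \<delta>_def s_def t_def k_def by simp
qed

lemma chain_sym:
  fixes f :: "real \<Rightarrow> real" and \<beta> :: real
  assumes cont: "continuous_on {0..1} f"
    and inc: "\<And>k j. k1 \<le> k \<Longrightarrow> okj k j \<Longrightarrow>
      \<bar>f (real (j + 1) / 2 ^ k) - f (real j / 2 ^ k)\<bar> \<le> \<beta> * (3/4) ^ (k - k1)"
    and b: "0 \<le> \<beta>"
    and s: "0 \<le> s" "s \<le> 5/8" and t: "0 \<le> t" "t \<le> 5/8" and d: "2 * \<bar>t - s\<bar> * 2 ^ k1 \<le> 1"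
  shows "\<bar>f t - f s\<bar> \<le> 8 * \<beta>"
proof (cases "s \<le> t")
  case True
  then show ?thesis using chain_real[OF cont inc b s t(2) True] d by simp
next
  case False
  then have "\<bar>f s - f t\<bar> \<le> 8 * \<beta>" using chain_real[OF cont inc b t(1) t(2) s(2)] d by simp
  then show ?thesis by simp
qed

lemma omega_bound:
  fixes X :: "real \<Rightarrow> 'a \<Rightarrow> real" and \<omega> :: 'a
  assumes cont: "continuous_on {0..1} (\<lambda>t. X t \<omega>)"
    and K: "0 < K" and e: "0 < \<epsilon>" "\<epsilon> \<le> 1/32" and k1: "2 * \<epsilon> * 2 ^ k1 \<le> 1"
    and a: "0 < a" and b: "0 < b"
    and inc1: "\<And>k j. k1 \<le> k \<Longrightarrow> okj k j \<Longrightarrow>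
      \<bar>X (real (j + 1) / 2 ^ k) \<omega> - X (real j / 2 ^ k) \<omega> - (real (j + 1) / 2 ^ k - real j / 2 ^ k) * (b - a)\<bar> \<le> K / 40 * (3/4) ^ (k - k1)"
    and inc2: "K / (5 * \<epsilon>) < a - b \<Longrightarrow> (\<forall>k j. okj k j \<longrightarrow>
      \<bar>X (real (j + 1) / 2 ^ k) \<omega> - X (real j / 2 ^ k) \<omega> - (real (j + 1) / 2 ^ k - real j / 2 ^ k) * (b - a)\<bar> \<le> a / 128 * (3/4) ^ k)
       \<and> \<bar>X (1/2) \<omega> - a - 1/2 * (b - a)\<bar> \<le> a / 16"
  shows "\<not> (hit_time X (2 * K) \<omega> \<le> 1/2 \<and> (INF r\<in>{0..\<epsilon>}. X (real_of_ereal (hit_time X (2 * K) \<omega>) + r) \<omega>) \<le> 3 * K / 2)"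
proof
  assume H: "hit_time X (2 * K) \<omega> \<le> 1/2 \<and> (INF r\<in>{0..\<epsilon>}. X (real_of_ereal (hit_time X (2 * K) \<omega>) + r) \<omega>) \<le> 3 * K / 2"
  define f where "f t = X t \<omega> - a - t * (b - a)" for t
  have fcont: "continuous_on {0..1} f" unfolding f_def by (intro continuous_intros cont)
  have fd: "X t \<omega> - X s \<omega> - (t - s) * (b - a) = f t - f s" for t s by (simp add: f_def algebra_simps)
  define S where "S = {r \<in> {0..1}. 2 * K \<le> X r \<omega>}"
  have hS: "hit_time X (2 * K) \<omega> = Inf (ereal ` S)" unfolding hit_time_def S_def ..
  have Sne: "S \<noteq> {}"
  proof
    assume "S = {}"
    then have "hit_time X (2 * K) \<omega> = \<infinity>" unfolding hS by (simp add: top_ereal_def)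
    then show False using H by simp
  qed
  have Sb: "bdd_below S" unfolding S_def by (rule bdd_belowI[of _ 0]) auto
  define s0 where "s0 = Inf S"
  have hs0: "hit_time X (2 * K) \<omega> = ereal s0" unfolding hS s0_def using ereal_Inf'[OF Sb Sne] by simp
  have s00: "0 \<le> s0" unfolding s0_def using Sne by (intro cInf_greatest) (auto simp: S_def)
  have half: "(1/2::ereal) = ereal (1/2)"
    by (metis ereal_divide numeral_eq_ereal one_ereal_def zero_neq_numeral)
  have s01: "s0 \<le> 1/2" using H unfolding hs0 half by simp
  define \<eta> where "\<eta> = (if 0 < b - a then min \<epsilon> (K / (5 * (b - a))) else \<epsilon>)"
  have \<eta>0: "0 < \<eta>" unfolding \<eta>_def using e K by auto
  have \<eta>e: "\<eta> \<le> \<epsilon>" unfolding \<eta>_def by auto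
  obtain r' where r'S: "r' \<in> S" and r'l: "r' < s0 + \<eta>" using cInf_lessD[OF Sne, of "s0 + \<eta>"] \<eta>0 unfolding s0_def by auto
  have r's: "s0 \<le> r'" unfolding s0_def using r'S Sb by (rule cInf_lower)
  have Xr': "2 * K \<le> X r' \<omega>" using r'S by (simp add: S_def)
  have main: "8 * K / 5 \<le> X (s0 + r) \<omega>" if r: "r \<in> {0..\<epsilon>}" for r
  proof -
    define t2 where "t2 = s0 + r"
    have t20: "0 \<le> t2" "t2 \<le> 5/8" using r s00 s01 e by (auto simp: t2_def)
    have r'b: "0 \<le> r'" "r' \<le> 5/8" using r's s00 r'l \<eta>e s01 e by auto
    show ?thesis
    proof (cases "K / (5 * \<epsilon>) < a - b")
      case False
      have ch: "\<bar>f t2 - f r'\<bar> \<le> 8 * (K / 40)"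
      proof (rule chain_sym[OF fcont _ _ r'b t20])
        show "0 \<le> K / 40" using K by simp
        show "\<bar>f (real (j + 1) / 2 ^ k) - f (real j / 2 ^ k)\<bar> \<le> K / 40 * (3 / 4) ^ (k - k1)" if "k1 \<le> k" "okj k j" for k j
          using inc1[OF that] unfolding fd .
        have "\<bar>t2 - r'\<bar> \<le> \<epsilon>" using r r's r'l \<eta>e by (auto simp: t2_def)
        then have "2 * \<bar>t2 - r'\<bar> * 2 ^ k1 \<le> 2 * \<epsilon> * 2 ^ k1" by (intro mult_right_mono) auto
        then show "2 * \<bar>t2 - r'\<bar> * 2 ^ k1 \<le> 1" using k1 by linarith
      qed
      have drift: "- (K / 5) \<le> (t2 - r') * (b - a)"
      proof (cases "0 < b - a")
        case True
        then have "\<eta> \<le> K / (5 * (b - a))" unfolding \<eta>_def by simp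
        then have "\<eta> * (b - a) \<le> K / 5" using True by (simp add: field_simps)
        moreover have "- \<eta> \<le> t2 - r'" using r r'l by (simp add: t2_def)
        then have "- \<eta> * (b - a) \<le> (t2 - r') * (b - a)" using True by (intro mult_right_mono) auto
        ultimately show ?thesis by simp
      next
        case nb: False
        have "t2 - r' \<le> \<epsilon>" using r r's by (simp add: t2_def)
        then have "\<epsilon> * (b - a) \<le> (t2 - r') * (b - a)" using nb by (intro mult_right_mono_neg) auto
        moreover have "- (K / 5) \<le> \<epsilon> * (b - a)" using False e by (simp add: field_simps)
        ultimately show ?thesis by simp
      qed
      have "X t2 \<omega> = X r' \<omega> + (f t2 - f r') + (t2 - r') * (b - a)" using fd[of t2 r'] by simp
      moreover have "- (K / 5) \<le> f t2 - f r'" using ch unfolding abs_le_iff by simp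
      ultimately show ?thesis using drift Xr' unfolding t2_def by simp
    next
      case True
      from inc2[OF True] have i2: "\<And>k j. okj k j \<Longrightarrow> \<bar>f (real (j + 1) / 2 ^ k) - f (real j / 2 ^ k)\<bar> \<le> a / 128 * (3/4) ^ (k - 0)"
        and h2: "\<bar>f (1/2)\<bar> \<le> a / 16" unfolding fd by (auto simp: f_def)
      have ch: "\<bar>f t2 - f (1/2)\<bar> \<le> 8 * (a / 128)"
        by (rule chain_sym[OF fcont i2 _ _ _ t20]) (use a t20 in \<open>auto simp: abs_le_iff abs_if\<close>)
      have "X t2 \<omega> = (1 - t2) * a + t2 * b + f t2" by (simp add: f_def algebra_simps)
      moreover have "3/8 * a \<le> (1 - t2) * a" using t20 a by (intro mult_right_mono) auto
      moreover have "0 \<le> t2 * b" using t20 b by simp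
      ultimately have "a / 4 \<le> X t2 \<omega>" using ch h2 by linarith
      moreover have "8 * K / 5 \<le> a / 4"
      proof -
        have "K / (5 * \<epsilon>) < a" using True b by linarith
        then have "K < 5 * \<epsilon> * a" using e by (simp add: field_simps)
        also have "\<dots> \<le> 5 / 32 * a" using e a by (intro mult_right_mono) auto
        finally show ?thesis by simp
      qed
      ultimately show ?thesis unfolding t2_def by simp
    qed
  qed
  have "8 * K / 5 \<le> (INF r\<in>{0..\<epsilon>}. X (real_of_ereal (hit_time X (2 * K) \<omega>) + r) \<omega>)"
    unfolding hs0 real_of_ereal.simps using e by (intro cINF_greatest main) auto
  then show False using H K by simp
qed

lemma pred_set:
  "f \<in> borel_measurable M \<Longrightarrow> g \<in> borel_measurable M \<Longrightarrow> {\<omega>\<in>space M. (d::real) < \<bar>f \<omega> - g \<omega> - c\<bar>} \<in> sets M"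
  by measurable

lemma okj_times:
  assumes "okj k j"
  shows "real (j + 1) / 2 ^ k \<in> {0..1}" "real j / 2 ^ k \<in> {0..1}"
proof -
  from assms have "8 * (j + 1) < 7 * 2 ^ k" by (simp add: okj_def)
  then have "8 * (j + 1) < 8 * 2 ^ k" by (rule less_le_trans) simp
  then have "j + 1 \<le> 2 ^ k" by simp
  then have "real (j + 1) \<le> real (2 ^ k)" by (simp only: of_nat_le_iff)
  then have h: "real (j + 1) \<le> 2 ^ k" by simp
  then show "real (j + 1) / 2 ^ k \<in> {0..1}" by simp
  have "real (j + 1) = real j + 1" by simp
  then have "real j \<le> 2 ^ k" using h by linarith
  then show "real j / 2 ^ k \<in> {0..1}" by simp
qed

lemma exp2: "exp (-2) \<le> (1/4::real)"
proof -
  have "2 \<le> exp (1::real)" using exp_ge_add_one_self[of 1] by simp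
  then have "2 * 2 \<le> exp (1::real) * exp 1" using mult_mono[of 2 "exp 1" 2 "exp (1::real)"] by simp
  then have "4 \<le> exp (2::real)" by (simp add: mult_exp_exp)
  then show ?thesis by (simp add: exp_minus field_simps)
qed

lemma main_fixed:
  fixes M :: "'a measure" and X :: "real \<Rightarrow> 'a \<Rightarrow> real"
  assumes br: "bes3_bridge M X a b" and a: "0 < a" and b: "0 < b"
    and K: "0 < K" and e: "0 < \<epsilon>" "\<epsilon> \<le> 1/32" and k1: "2 * \<epsilon> * 2 ^ k1 \<le> 1"
    and G: "16 \<le> G" and G1: "G \<le> (K / 40)\<^sup>2 * 2 ^ k1 / 2"
    and G2: "K / (5 * \<epsilon>) < a - b \<Longrightarrow> G \<le> (a / 128)\<^sup>2 * 2 ^ 0 / 2"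
  shows "measure M {\<omega> \<in> space M. hit_time X (2 * K) \<omega> \<le> 1/2 \<and>
            (INF r\<in>{0..\<epsilon>}. X (real_of_ereal (hit_time X (2 * K) \<omega>) + r) \<omega>) \<le> 3 * K / 2}
      \<le> (1 / (1 - exp (- 2 * a * b))) * (4 * 2 ^ k1 + 6) * exp (- G)"
proof -
  define Kf where "Kf = 1 / (1 - exp (- 2 * a * b))"
  have Kf: "0 \<le> Kf" unfolding Kf_def using a b by simp
  have ps: "prob_space M" and meas: "\<And>t. t \<in> {0..1} \<Longrightarrow> X t \<in> borel_measurable M"
    and cont: "\<And>\<omega>. \<omega> \<in> space M \<Longrightarrow> continuous_on {0..1} (\<lambda>t. X t \<omega>)"
    using br unfolding bes3_bridge_def by auto
  interpret prob_space M by (fact ps)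
  define A1 where "A1 i j = {\<omega>\<in>space M. K / 40 * (3/4) ^ i < \<bar>X (real (j + 1) / 2 ^ (k1 + i)) \<omega> - X (real j / 2 ^ (k1 + i)) \<omega>
      - (real (j + 1) / 2 ^ (k1 + i) - real j / 2 ^ (k1 + i)) * (b - a)\<bar>}" for i j
  define A2 where "A2 i j = {\<omega>\<in>space M. a / 128 * (3/4) ^ i < \<bar>X (real (j + 1) / 2 ^ (0 + i)) \<omega> - X (real j / 2 ^ (0 + i)) \<omega>
      - (real (j + 1) / 2 ^ (0 + i) - real j / 2 ^ (0 + i)) * (b - a)\<bar>}" for i j
  define A3 where "A3 = {\<omega>\<in>space M. a / 16 < \<bar>X (1/2) \<omega> - a - 1/2 * (b - a)\<bar>}"
  define U1 where "U1 i = (\<Union>j\<in>{j. okj (k1 + i) j}. A1 i j)" for i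
  define U2 where "U2 i = (\<Union>j\<in>{j. okj (0 + i) j}. A2 i j)" for i
  define big where "big \<longleftrightarrow> K / (5 * \<epsilon>) < a - b"
  define B where "B = (\<Union>i. U1 i) \<union> (if big then (\<Union>i. U2 i) \<union> A3 else {})"
  define E where "E = {\<omega> \<in> space M. hit_time X (2 * K) \<omega> \<le> 1/2 \<and>
            (INF r\<in>{0..\<epsilon>}. X (real_of_ereal (hit_time X (2 * K) \<omega>) + r) \<omega>) \<le> 3 * K / 2}"
  have A1s: "okj (k1 + i) j \<Longrightarrow> A1 i j \<in> sets M" for i j
    unfolding A1_def by (intro pred_set meas okj_times)
  have A2s: "okj (0 + i) j \<Longrightarrow> A2 i j \<in> sets M" for i j
    unfolding A2_def by (intro pred_set meas okj_times)
  have A3s: "A3 \<in> sets M" unfolding A3_def by (intro pred_set[where g="\<lambda>_. a"] meas) auto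
  have U1s: "U1 i \<in> sets M" for i unfolding U1_def by (intro sets.finite_UN finite_okj A1s) auto
  have U2s: "U2 i \<in> sets M" for i unfolding U2_def by (intro sets.finite_UN finite_okj A2s) auto
  have Bs: "B \<in> sets M" unfolding B_def using U1s U2s A3s by auto
  have EB: "E \<subseteq> B"
  proof
    fix \<omega> assume \<omega>E: "\<omega> \<in> E"
    then have \<omega>: "\<omega> \<in> space M" by (simp add: E_def)
    show "\<omega> \<in> B"
    proof (rule ccontr)
      assume nB: "\<omega> \<notin> B"
      have "\<not> (hit_time X (2 * K) \<omega> \<le> 1/2 \<and> (INF r\<in>{0..\<epsilon>}. X (real_of_ereal (hit_time X (2 * K) \<omega>) + r) \<omega>) \<le> 3 * K / 2)"
      proof (rule omega_bound[where X=X and \<omega>=\<omega>, OF cont[OF \<omega>] K e k1 a b])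
        fix k j assume kk: "k1 \<le> k" and j: "okj k j"
        define i where "i = k - k1"
        have ki: "k = k1 + i" using kk by (simp add: i_def)
        have "\<omega> \<notin> A1 i j" using nB j unfolding B_def U1_def ki by auto
        then show "\<bar>X (real (j + 1) / 2 ^ k) \<omega> - X (real j / 2 ^ k) \<omega> - (real (j + 1) / 2 ^ k - real j / 2 ^ k) * (b - a)\<bar> \<le> K / 40 * (3/4) ^ (k - k1)"
          using \<omega> unfolding A1_def ki by auto
      next
        assume bg: "K / (5 * \<epsilon>) < a - b"
        then have nB2: "\<omega> \<notin> (\<Union>i. U2 i) \<union> A3" using nB unfolding B_def big_def by auto
        show "(\<forall>k j. okj k j \<longrightarrow>
          \<bar>X (real (j + 1) / 2 ^ k) \<omega> - X (real j / 2 ^ k) \<omega> - (real (j + 1) / 2 ^ k - real j / 2 ^ k) * (b - a)\<bar> \<le> a / 128 * (3/4) ^ k)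
          \<and> \<bar>X (1/2) \<omega> - a - 1/2 * (b - a)\<bar> \<le> a / 16"
          using nB2 \<omega> unfolding U2_def A2_def A3_def by (auto simp: not_less)
      qed
      then show False using \<omega>E by (simp add: E_def)
    qed
  qed
  have D1: "2 * exp (- ((K / 40)\<^sup>2 * 2 ^ k1 / 2) / 8) \<le> 1/2"
  proof -
    have "exp (- ((K / 40)\<^sup>2 * 2 ^ k1 / 2) / 8) \<le> exp (-2)" using G G1 by simp
    then show ?thesis using exp2 by linarith
  qed
  have P1: "emeasure M (\<Union>i. U1 i) \<le> ennreal (4 * Kf * 2 ^ k1 * exp (- ((K / 40)\<^sup>2 * 2 ^ k1 / 2)))"
  proof (rule level_sum[OF U1s _ Kf D1])
    fix i
    show "emeasure M (U1 i) \<le> ennreal (2 ^ (k1 + i) * (2 * Kf * exp (- ((K / 40)\<^sup>2 * 2 ^ k1 / 2 * (1 + real i / 8)))))"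
      unfolding U1_def
    proof (rule level_union)
      fix j assume j: "okj (k1 + i) j"
      show "A1 i j \<in> sets M" by (rule A1s[OF j])
      have "emeasure M (A1 i j) \<le> ennreal (Kf * (2 * exp (- (((K / 40)\<^sup>2 * 2 ^ k1 / 2) * (1 + real i / 8)))))"
        unfolding A1_def Kf_def by (rule incr_prob[OF br a b j]) (use K in simp)
      then show "emeasure M (A1 i j) \<le> ennreal (2 * Kf * exp (- ((K / 40)\<^sup>2 * 2 ^ k1 / 2 * (1 + real i / 8))))"
        by (simp add: mult_ac)
    next
      show "0 \<le> 2 * Kf * exp (- ((K / 40)\<^sup>2 * 2 ^ k1 / 2 * (1 + real i / 8)))" using Kf by simp
    qed
  qed
  have P1': "emeasure M (\<Union>i. U1 i) \<le> ennreal (4 * Kf * 2 ^ k1 * exp (- G))"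
  proof -
    have "exp (- ((K / 40)\<^sup>2 * 2 ^ k1 / 2)) \<le> exp (- G)" using G1 by simp
    then have "4 * Kf * 2 ^ k1 * exp (- ((K / 40)\<^sup>2 * 2 ^ k1 / 2)) \<le> 4 * Kf * 2 ^ k1 * exp (- G)"
      using Kf by (intro mult_left_mono) auto
    then show ?thesis using P1 by (meson ennreal_leI order_trans)
  qed
  define R where "R = (if big then ennreal (4 * Kf * exp (- G)) + ennreal (2 * Kf * exp (- G)) else 0)"
  have P23: "emeasure M (if big then (\<Union>i. U2 i) \<union> A3 else {}) \<le> R"
  proof (cases big)
    case False then show ?thesis by (simp add: R_def)
  next
    case True
    then have GD: "G \<le> (a / 128)\<^sup>2 * 2 ^ 0 / 2" using G2 by (simp add: big_def)
    have D2: "2 * exp (- ((a / 128)\<^sup>2 * 2 ^ 0 / 2) / 8) \<le> 1/2"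
    proof -
      have "exp (- ((a / 128)\<^sup>2 * 2 ^ 0 / 2) / 8) \<le> exp (-2)" using G GD by simp
      then show ?thesis using exp2 by linarith
    qed
    have P2: "emeasure M (\<Union>i. U2 i) \<le> ennreal (4 * Kf * 2 ^ 0 * exp (- ((a / 128)\<^sup>2 * 2 ^ 0 / 2)))"
    proof (rule level_sum[OF U2s _ Kf D2])
      fix i
      show "emeasure M (U2 i) \<le> ennreal (2 ^ (0 + i) * (2 * Kf * exp (- ((a / 128)\<^sup>2 * 2 ^ 0 / 2 * (1 + real i / 8)))))"
        unfolding U2_def
      proof (rule level_union)
        fix j assume j: "okj (0 + i) j"
        show "A2 i j \<in> sets M" by (rule A2s[OF j])
        have "emeasure M (A2 i j) \<le> ennreal (Kf * (2 * exp (- (((a / 128)\<^sup>2 * 2 ^ 0 / 2) * (1 + real i / 8)))))"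
          unfolding A2_def Kf_def by (rule incr_prob[OF br a b j]) (use a in simp)
        then show "emeasure M (A2 i j) \<le> ennreal (2 * Kf * exp (- ((a / 128)\<^sup>2 * 2 ^ 0 / 2 * (1 + real i / 8))))"
          by (simp add: mult_ac)
      next
        show "0 \<le> 2 * Kf * exp (- ((a / 128)\<^sup>2 * 2 ^ 0 / 2 * (1 + real i / 8)))" using Kf by simp
      qed
    qed
    have P2': "emeasure M (\<Union>i. U2 i) \<le> ennreal (4 * Kf * exp (- G))"
    proof -
      have "exp (- ((a / 128)\<^sup>2 * 2 ^ 0 / 2)) \<le> exp (- G)" using GD by simp
      then have "4 * Kf * exp (- ((a / 128)\<^sup>2 * 2 ^ 0 / 2)) \<le> 4 * Kf * exp (- G)"
        using Kf by (intro mult_left_mono) auto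
      then have "4 * Kf * 2 ^ 0 * exp (- ((a / 128)\<^sup>2 * 2 ^ 0 / 2)) \<le> 4 * Kf * exp (- G)" by simp
      then show ?thesis by (rule order_trans[OF P2 ennreal_leI])
    qed
    have P3: "emeasure M A3 \<le> ennreal (Kf * (2 * exp (- (a / 16)\<^sup>2 / (2 * (1/2 * (1 - 1/2))))))"
      unfolding A3_def Kf_def by (rule bridge_single_prob[OF br a b]) (use a in auto)
    have P3': "emeasure M A3 \<le> ennreal (2 * Kf * exp (- G))"
    proof -
      have e1: "(a / 16)\<^sup>2 / (2 * (1/2 * (1 - 1/2))) = a\<^sup>2 / 128" by (simp add: power2_eq_square)
      have e2: "(a / 128)\<^sup>2 * 2 ^ 0 / 2 = a\<^sup>2 / 32768" by (simp add: power2_eq_square)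
      have "a\<^sup>2 / 32768 \<le> a\<^sup>2 / 128" by (simp add: divide_left_mono)
      then have "G \<le> (a / 16)\<^sup>2 / (2 * (1/2 * (1 - 1/2)))" using GD unfolding e1 e2 by linarith
      then have "exp (- (a / 16)\<^sup>2 / (2 * (1/2 * (1 - 1/2)))) \<le> exp (- G)" by simp
      then have "Kf * (2 * exp (- (a / 16)\<^sup>2 / (2 * (1/2 * (1 - 1/2))))) \<le> Kf * (2 * exp (- G))"
        using Kf by (intro mult_left_mono) auto
      then have "Kf * (2 * exp (- (a / 16)\<^sup>2 / (2 * (1/2 * (1 - 1/2))))) \<le> 2 * Kf * exp (- G)"
        by (simp only: mult.assoc[symmetric] mult.commute[of Kf 2])
      then show ?thesis by (rule order_trans[OF P3 ennreal_leI])
    qed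
    have "emeasure M ((\<Union>i. U2 i) \<union> A3) \<le> emeasure M (\<Union>i. U2 i) + emeasure M A3"
      by (rule emeasure_subadditive) (use U2s A3s in auto)
    also have "\<dots> \<le> ennreal (4 * Kf * exp (- G)) + ennreal (2 * Kf * exp (- G))"
      by (intro add_mono P2' P3')
    finally show ?thesis using True by (simp add: R_def)
  qed
  have R: "R \<le> ennreal (6 * Kf * exp (- G))"
    unfolding R_def using Kf by (auto simp: ennreal_plus[symmetric] simp del: ennreal_plus)
  have "emeasure M B \<le> emeasure M (\<Union>i. U1 i) + emeasure M (if big then (\<Union>i. U2 i) \<union> A3 else {})"
    unfolding B_def by (rule emeasure_subadditive) (use U1s U2s A3s in auto)
  also have "\<dots> \<le> ennreal (4 * Kf * 2 ^ k1 * exp (- G)) + ennreal (6 * Kf * exp (- G))"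
    using P1' P23 R by (intro add_mono) auto
  also have "\<dots> = ennreal (Kf * (4 * 2 ^ k1 + 6) * exp (- G))"
    using Kf by (simp add: ennreal_plus[symmetric] algebra_simps del: ennreal_plus)
  finally have eB: "emeasure M B \<le> ennreal (Kf * (4 * 2 ^ k1 + 6) * exp (- G))" .
  have mB: "measure M B \<le> Kf * (4 * 2 ^ k1 + 6) * exp (- G)"
    using eB Kf by (simp add: emeasure_eq_measure)
  have "measure M E \<le> measure M B"
  proof (cases "E \<in> sets M")
    case True then show ?thesis using EB Bs by (intro finite_measure_mono)
  next
    case False then show ?thesis by (simp add: measure_notin_sets)
  qed
  with mB show ?thesis unfolding E_def Kf_def by simp
qed

lemma Kf_bound:
  fixes x :: real assumes "0 < x"
  shows "1 / (1 - exp (- x)) \<le> 1 + 1 / x"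
proof -
  have e: "0 < 1 - exp (- x)" using assms by simp
  have "1 + x \<le> exp x" by (rule exp_ge_add_one_self)
  then have "(1 + x) * exp (- x) \<le> 1" by (simp add: exp_minus field_simps)
  then have "x \<le> (x + 1) * (1 - exp (- x))" by (simp add: algebra_simps)
  then have "x / (1 - exp (- x)) \<le> x + 1" using e by (simp add: divide_le_eq)
  then show ?thesis using assms e by (simp add: field_simps)
qed

lemma final_fixed:
  fixes M :: "'a measure" and X :: "real \<Rightarrow> 'a \<Rightarrow> real"
  assumes C: "0 < C" and g: "g = C\<^sup>2 / 819200"
    and e: "0 < \<epsilon>" "\<epsilon> \<le> 1/32" and E2: "16 * sqrt \<epsilon> \<le> g"
    and E3: "4 / (\<epsilon>^2 * sqrt \<epsilon>) \<le> exp (g / (2 * sqrt \<epsilon>))"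
    and y: "0 < y" and z: "0 < z"
    and br: "bes3_bridge M X (\<epsilon> powr (3/4) * z) (\<epsilon> powr (3/4) * y)"
  shows "measure M {\<omega> \<in> space M.
                hit_time X (2 * C * \<epsilon> powr (1/4)) \<omega> \<le> 1/2 \<and>
                (INF r\<in>{0..\<epsilon>}. X (real_of_ereal (hit_time X (2 * C * \<epsilon> powr (1/4)) \<omega>) + r) \<omega>)
                  \<le> 3 * C * \<epsilon> powr (1/4) / 2}
             \<le> (1 / (y * z) + 2) * exp (- (g / 2) / sqrt \<epsilon>)"
proof -
  define u where "u = \<epsilon> powr (1/4)"
  have u0: "0 < u" using e by (simp add: u_def)
  have u4: "\<epsilon> = u ^ 4" unfolding u_def using e by (simp add: powr_realpow[symmetric] powr_powr)
  have u3: "\<epsilon> powr (3/4) = u ^ 3" unfolding u_def using e by (simp add: powr_realpow[symmetric] powr_powr)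
  have u2: "sqrt \<epsilon> = u ^ 2" unfolding u_def using e by (simp add: powr_realpow[symmetric] powr_powr powr_half_sqrt[symmetric])
  have "u ^ 4 \<le> 1" using u4 e by simp
  then have u1: "u \<le> 1" using u0 by (simp add: power_le_one_iff)
  define a where "a = u ^ 3 * z"
  define b where "b = u ^ 3 * y"
  define K where "K = C * u"
  have a: "0 < a" and b: "0 < b" and K: "0 < K" using u0 y z C by (auto simp: a_def b_def K_def)
  define N where "N = nat \<lfloor>1 / (2 * \<epsilon>)\<rfloor>"
  have N1: "1 \<le> N" unfolding N_def using e by (simp add: le_nat_floor field_simps)
  obtain k1 where k1: "2 ^ k1 \<le> N" "N < 2 ^ (k1 + 1)" using ex_power_ivl1[of 2 N] N1 by auto
  have NR: "real N \<le> 1 / (2 * \<epsilon>)" "1 / (2 * \<epsilon>) < real N + 1" unfolding N_def using e by auto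
  have k1a: "2 * \<epsilon> * 2 ^ k1 \<le> 1"
  proof -
    have "real (2 ^ k1) \<le> real N" using k1(1) by (simp only: of_nat_le_iff)
    moreover have "real (2 ^ k1) = (2::real) ^ k1" by simp
    ultimately have "(2::real) ^ k1 \<le> 1 / (2 * \<epsilon>)" using NR by linarith
    then show ?thesis using e by (simp add: field_simps)
  qed
  have k1b: "1 / (4 * \<epsilon>) < 2 ^ k1"
  proof -
    have "N + 1 \<le> 2 ^ (k1 + 1)" using k1(2) by linarith
    then have "real (N + 1) \<le> real (2 ^ (k1 + 1))" by (simp only: of_nat_le_iff)
    moreover have "real (2 ^ (k1 + 1)) = 2 * (2::real) ^ k1" by simp
    moreover have "real (N + 1) = real N + 1" by simp
    ultimately have "1 / (2 * \<epsilon>) < 2 * 2 ^ k1" using NR by linarith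
    then show ?thesis using e by (simp add: field_simps)
  qed
  define G where "G = g / u ^ 2"
  have g0: "0 < g" using C by (simp add: g)
  have G16: "16 \<le> G" using E2 u0 unfolding G_def u2 by (simp add: field_simps)
  have G1: "G \<le> (K / 40)\<^sup>2 * 2 ^ k1 / 2"
  proof -
    have "(K / 40)\<^sup>2 * (1 / (4 * \<epsilon>)) / 2 \<le> (K / 40)\<^sup>2 * 2 ^ k1 / 2" using k1b by (intro divide_right_mono mult_left_mono) auto
    moreover have "(K / 40)\<^sup>2 * (1 / (4 * \<epsilon>)) / 2 = C\<^sup>2 / (12800 * u ^ 2)"
      unfolding K_def u4 using u0 by (simp add: field_simps power2_eq_square power_numeral_reduce)
    moreover have "G \<le> C\<^sup>2 / (12800 * u ^ 2)" unfolding G_def g using u0 by (simp add: field_simps)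
    ultimately show ?thesis by linarith
  qed
  have G2: "G \<le> (a / 128)\<^sup>2 * 2 ^ 0 / 2" if big: "K / (5 * \<epsilon>) < a - b"
  proof -
    have "K / (5 * \<epsilon>) < a" using big b by linarith
    then have "C / (5 * u ^ 3) < a" unfolding K_def u4 using u0 by (simp add: field_simps power_numeral_reduce)
    then have "(C / (5 * u ^ 3))\<^sup>2 \<le> a\<^sup>2" using C u0 by (intro power_mono) auto
    then have "C\<^sup>2 / (25 * u ^ 6) \<le> a\<^sup>2" by (simp add: power2_eq_square power_numeral_reduce field_simps)
    moreover have "C\<^sup>2 / (25 * u ^ 2) \<le> C\<^sup>2 / (25 * u ^ 6)"
    proof -
      have "u ^ 6 \<le> u ^ 2" using u0 u1 by (intro power_decreasing) auto
      then show ?thesis using u0 by (intro divide_left_mono mult_left_mono) auto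
    qed
    ultimately have "C\<^sup>2 / (25 * u ^ 2) \<le> a\<^sup>2" by linarith
    moreover have "G = (C\<^sup>2 / (25 * u ^ 2)) / 32768" unfolding G_def g by (simp add: field_simps)
    moreover have "(a / 128)\<^sup>2 * 2 ^ 0 / 2 = a\<^sup>2 / 32768" by (simp add: power2_eq_square)
    ultimately show ?thesis by (simp add: divide_right_mono)
  qed
  have MF: "measure M {\<omega> \<in> space M. hit_time X (2 * K) \<omega> \<le> 1/2 \<and>
            (INF r\<in>{0..\<epsilon>}. X (real_of_ereal (hit_time X (2 * K) \<omega>) + r) \<omega>) \<le> 3 * K / 2}
      \<le> (1 / (1 - exp (- 2 * a * b))) * (4 * 2 ^ k1 + 6) * exp (- G)"
    by (rule main_fixed[OF _ a b K e k1a G16 G1 G2]) (use br u3 in \<open>simp add: a_def b_def\<close>)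
  have set_eq: "{\<omega> \<in> space M.
                hit_time X (2 * C * \<epsilon> powr (1/4)) \<omega> \<le> 1/2 \<and>
                (INF r\<in>{0..\<epsilon>}. X (real_of_ereal (hit_time X (2 * C * \<epsilon> powr (1/4)) \<omega>) + r) \<omega>)
                  \<le> 3 * C * \<epsilon> powr (1/4) / 2} = {\<omega> \<in> space M. hit_time X (2 * K) \<omega> \<le> 1/2 \<and>
            (INF r\<in>{0..\<epsilon>}. X (real_of_ereal (hit_time X (2 * K) \<omega>) + r) \<omega>) \<le> 3 * K / 2}"
    unfolding K_def u_def by (simp add: mult.assoc)
  define Q where "Q = exp (- (g / 2) / u ^ 2)"
  have Q0: "0 < Q" by (simp add: Q_def)
  have QQ: "exp (- G) = Q * Q"
  proof -
    have "- G = - (g / 2) / u ^ 2 + - (g / 2) / u ^ 2" unfolding G_def by (simp add: field_simps)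
    then show ?thesis unfolding Q_def by (simp only: exp_add)
  qed
  have E3': "4 * Q \<le> u ^ 10"
  proof -
    have "\<epsilon> ^ 2 * sqrt \<epsilon> = \<epsilon> ^ 2 * u ^ 2" by (simp only: u2)
    also have "\<dots> = u ^ 10" unfolding u4 by algebra
    finally have eq10: "\<epsilon> ^ 2 * sqrt \<epsilon> = u ^ 10" .
    have "4 / u ^ 10 \<le> exp (g / (2 * u ^ 2))" using E3[unfolded eq10, unfolded u2] .
    moreover have "exp (g / (2 * u ^ 2)) * Q = 1"
    proof -
      have "g / (2 * u ^ 2) + - (g / 2) / u ^ 2 = 0" using u0 by (simp add: field_simps)
      then have "exp (g / (2 * u ^ 2)) * Q = exp 0" unfolding Q_def by (simp only: exp_add[symmetric])
      then show ?thesis by simp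
    qed
    ultimately have "4 / u ^ 10 * Q \<le> 1" using Q0 by (metis mult_right_mono less_imp_le)
    then show ?thesis using u0 by (simp add: field_simps)
  qed
  have u10: "u ^ 10 \<le> u ^ 4" using u0 u1 by (intro power_decreasing) auto
  define Kf where "Kf = 1 / (1 - exp (- 2 * a * b))"
  have Kf0: "0 \<le> Kf" unfolding Kf_def using a b by simp
  have Kfb: "Kf \<le> 1 + 1 / (2 * u ^ 6 * y * z)"
  proof -
    have "Kf \<le> 1 + 1 / (2 * a * b)" unfolding Kf_def using Kf_bound[of "2 * a * b"] a b by simp
    also have "2 * a * b = 2 * u ^ 6 * y * z" by (simp add: a_def b_def power_numeral_reduce algebra_simps)
    finally show ?thesis .
  qed
  have lev: "4 * 2 ^ k1 + 6 \<le> (8 / u ^ 4 :: real)"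
  proof -
    have "(2::real) ^ k1 \<le> 1 / (2 * \<epsilon>)" using k1a e by (simp add: field_simps)
    moreover have "6 \<le> 6 / \<epsilon>" using e by (simp add: field_simps)
    ultimately have "4 * 2 ^ k1 + 6 \<le> 8 / \<epsilon>" using e by (simp add: field_simps)
    then show ?thesis unfolding u4 .
  qed
  have yz: "0 < y * z" using y z by simp
  have "Kf * (4 * 2 ^ k1 + 6) * exp (- G) \<le> (1 + 1 / (2 * u ^ 6 * y * z)) * (8 / u ^ 4) * (Q * Q)"
  proof -
    have pos: "0 \<le> (1 + 1 / (2 * u ^ 6 * y * z)) * (8 / u ^ 4)" using u0 y z by simp
    have "0 \<le> (4 * 2 ^ k1 + 6 :: real)" by simp
    then show ?thesis unfolding QQ using Kfb lev Kf0 Q0 pos by (intro mult_mono) auto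
  qed
  also have "\<dots> = (8 * Q / u ^ 4) * Q + (4 * Q / u ^ 10) * Q / (y * z)"
    using u0 y z by (simp add: field_simps power_numeral_reduce)
  also have "\<dots> \<le> 2 * Q + 1 * Q / (y * z)"
  proof (intro add_mono mult_right_mono divide_right_mono)
    show "8 * Q / u ^ 4 \<le> 2" using E3' u10 u0 by (simp add: field_simps)
    show "4 * Q / u ^ 10 \<le> 1" using E3' u0 by (simp add: field_simps)
  qed (use Q0 yz in auto)
  also have "\<dots> = (1 / (y * z) + 2) * exp (- (g / 2) / sqrt \<epsilon>)" unfolding Q_def u2 by (simp add: field_simps)
  finally have "Kf * (4 * 2 ^ k1 + 6) * exp (- G) \<le> (1 / (y * z) + 2) * exp (- (g / 2) / sqrt \<epsilon>)" .
  with MF show ?thesis unfolding set_eq Kf_def by linarith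
qed

theorem lemma10:
  fixes C :: real
  assumes "C > 2 * pi"
  shows "\<exists>C9 > 0. \<forall>\<^sub>F \<epsilon> in at_right 0. \<forall>y > 0. \<forall>z > 0.
           \<forall>(M :: 'a measure) X.
             bes3_bridge M X (\<epsilon> powr (3/4) * z) (\<epsilon> powr (3/4) * y) \<longrightarrow>
             measure M {\<omega> \<in> space M.
                hit_time X (2 * C * \<epsilon> powr (1/4)) \<omega> \<le> 1/2 \<and>
                (INF r\<in>{0..\<epsilon>}. X (real_of_ereal (hit_time X (2 * C * \<epsilon> powr (1/4)) \<omega>) + r) \<omega>)
                  \<le> 3 * C * \<epsilon> powr (1/4) / 2}
             \<le> (1 / (y * z) + 2) * exp (- C9 / sqrt \<epsilon>)"
proof -
  have C: "0 < C" using assms pi_gt_zero by linarith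
  define g where "g = C\<^sup>2 / 819200"
  have g0: "0 < g" using C by (simp add: g_def)
  have ev1: "\<forall>\<^sub>F \<epsilon> in at_right 0. 0 < (\<epsilon>::real)" by (simp add: eventually_at_right_less)
  have ev2: "\<forall>\<^sub>F \<epsilon> in at_right 0. (\<epsilon>::real) \<le> 1/32" by real_asymp
  have ev3: "\<forall>\<^sub>F \<epsilon> in at_right 0. 16 * sqrt \<epsilon> \<le> g" using g0 by real_asymp
  have ev4: "\<forall>\<^sub>F \<epsilon> in at_right 0. 4 / (\<epsilon>^2 * sqrt \<epsilon>) \<le> exp (g / (2 * sqrt \<epsilon>))" using g0 by real_asymp
  have "\<forall>\<^sub>F \<epsilon> in at_right 0. \<forall>y > 0. \<forall>z > 0.
           \<forall>(M :: 'a measure) X.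
             bes3_bridge M X (\<epsilon> powr (3/4) * z) (\<epsilon> powr (3/4) * y) \<longrightarrow>
             measure M {\<omega> \<in> space M.
                hit_time X (2 * C * \<epsilon> powr (1/4)) \<omega> \<le> 1/2 \<and>
                (INF r\<in>{0..\<epsilon>}. X (real_of_ereal (hit_time X (2 * C * \<epsilon> powr (1/4)) \<omega>) + r) \<omega>)
                  \<le> 3 * C * \<epsilon> powr (1/4) / 2}
             \<le> (1 / (y * z) + 2) * exp (- (g / 2) / sqrt \<epsilon>)"
    using ev1 ev2 ev3 ev4
  proof eventually_elim
    case (elim \<epsilon>)
    show ?case
    proof (intro allI impI)
      fix y z :: real and M :: "'a measure" and X
      assume y: "0 < y" and z: "0 < z" and br: "bes3_bridge M X (\<epsilon> powr (3/4) * z) (\<epsilon> powr (3/4) * y)"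
      show "measure M {\<omega> \<in> space M.
                hit_time X (2 * C * \<epsilon> powr (1/4)) \<omega> \<le> 1/2 \<and>
                (INF r\<in>{0..\<epsilon>}. X (real_of_ereal (hit_time X (2 * C * \<epsilon> powr (1/4)) \<omega>) + r) \<omega>)
                  \<le> 3 * C * \<epsilon> powr (1/4) / 2}
             \<le> (1 / (y * z) + 2) * exp (- (g / 2) / sqrt \<epsilon>)"
        by (rule final_fixed[OF C g_def elim y z br])
    qed
  qed
  moreover have "0 < g / 2" using g0 by simp
  ultimately show ?thesis by blast
qed

end
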